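(* For any based spaces $(X,x_0)$ and $(Y,y_0)$, the homomorphism $\phi:\pi_1^{\tau}(X\times Y,(x_0,y_0))\to\pi_1^{\tau}(X,x_0)\times\pi_1^{\tau}(Y,y_0)$ induced by the two projections, $\phi([(\alpha,\beta)])=([\alpha],[\beta])$, is a natural isomorphism of topological groups (the target carrying the product topology).
   Context: $\Omega(Z,z)$ is the loop space with the compact-open topology; $\pi_1^{qtop}(Z,z)$ is $\pi_1(Z,z)$ with the quotient topology via $\alpha\mapsto[\alpha]$. $F_M(S)$ is the free (Markov) topological group on a space $S$. For a group with topology $G$, $\tau(G)$ is $G$ with the quotient topology with respect to the multiplication epimorphism $m_G:F_M(G)\to G$ (generator $g\mapsto g$). $\pi_1^{\tau}=\tau\circ\pi_1^{qtop}$. *)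

theory Defs
  imports "HOL-Analysis.Analysis" "HOL-Algebra.Group"
begin

definition quotient_topology :: "'a topology \<Rightarrow> ('a \<Rightarrow> 'b) \<Rightarrow> 'b topology" where
  "quotient_topology X f =
     topology (\<lambda>U. U \<subseteq> f ` topspace X \<and> openin X {x \<in> topspace X. f x \<in> U})"

definition loops :: "'a topology \<Rightarrow> 'a \<Rightarrow> (real \<Rightarrow> 'a) set" where
  "loops X x = {\<alpha>. pathin X \<alpha> \<and> \<alpha> 0 = x \<and> \<alpha> 1 = x}"

text \<open>Compact-open topology on the loops: generated by the subbasis sets
  \<open>{\<alpha>. \<alpha>(K) \<subseteq> W}\<close>, \<open>K\<close> compact in \<open>[0,1]\<close>, \<open>W\<close> open in \<open>X\<close>.\<close>
definition loop_space :: "'a topology \<Rightarrow> 'a \<Rightarrow> (real \<Rightarrow> 'a) topology" where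
  "loop_space X x = topology (\<lambda>U. \<exists>\<U>. U = \<Union>\<U> \<and>
     (\<forall>V\<in>\<U>. \<exists>\<F>. finite \<F> \<and>
        \<F> \<subseteq> {{\<alpha> \<in> loops X x. \<alpha> ` K \<subseteq> W} | K W.
                compactin (top_of_set {0..1::real}) K \<and> openin X W} \<and>
        V = loops X x \<inter> \<Inter>\<F>))"

definition loop_homotopic :: "'a topology \<Rightarrow> 'a \<Rightarrow> (real \<Rightarrow> 'a) \<Rightarrow> (real \<Rightarrow> 'a) \<Rightarrow> bool" where
  "loop_homotopic X x \<alpha> \<beta> =
     homotopic_with (\<lambda>r. r 0 = x \<and> r 1 = x) (top_of_set {0..1}) X \<alpha> \<beta>"

definition loop_class :: "'a topology \<Rightarrow> 'a \<Rightarrow> (real \<Rightarrow> 'a) \<Rightarrow> (real \<Rightarrow> 'a) set" where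
  "loop_class X x \<alpha> = {\<beta> \<in> loops X x. loop_homotopic X x \<alpha> \<beta>}"

definition loop_join :: "(real \<Rightarrow> 'a) \<Rightarrow> (real \<Rightarrow> 'a) \<Rightarrow> real \<Rightarrow> 'a" where
  "loop_join \<alpha> \<beta> = (\<lambda>t. if t \<le> 1/2 then \<alpha> (2 * t) else \<beta> (2 * t - 1))"

definition fundamental_group :: "'a topology \<Rightarrow> 'a \<Rightarrow> (real \<Rightarrow> 'a) set monoid" where
  "fundamental_group X x =
     \<lparr>carrier = loop_class X x ` loops X x,
      mult = (\<lambda>A B. {\<gamma> \<in> loops X x. \<exists>\<alpha>\<in>A. \<exists>\<beta>\<in>B. loop_homotopic X x (loop_join \<alpha> \<beta>) \<gamma>}),
      one = loop_class X x (\<lambda>t. x)\<rparr>"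

definition pi1_qtop :: "'a topology \<Rightarrow> 'a \<Rightarrow> (real \<Rightarrow> 'a) set topology" where
  "pi1_qtop X x = quotient_topology (loop_space X x) (loop_class X x)"

definition group_topology :: "('g, 'm) monoid_scheme \<Rightarrow> 'g topology \<Rightarrow> bool" where
  "group_topology G T \<longleftrightarrow> group G \<and> topspace T = carrier G \<and>
     continuous_map (prod_topology T T) T (\<lambda>(a, b). a \<otimes>\<^bsub>G\<^esub> b) \<and>
     continuous_map T T (\<lambda>a. inv\<^bsub>G\<^esub> a)"

text \<open>Free group on a set \<open>S\<close>: reduced words of letters \<open>(s, True)\<close> (= \<open>s\<close>)
  and \<open>(s, False)\<close> (= \<open>s\<^sup>-\<^sup>1\<close>).\<close>
definition word_reduce :: "('a \<times> bool) list \<Rightarrow> ('a \<times> bool) list" where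
  "word_reduce xs = foldr (\<lambda>x acc. case acc of [] \<Rightarrow> [x]
      | y # ys \<Rightarrow> (if fst x = fst y \<and> snd x \<noteq> snd y then ys else x # acc)) xs []"

definition reduced_word :: "('a \<times> bool) list \<Rightarrow> bool" where
  "reduced_word w \<longleftrightarrow> (\<forall>i. Suc i < length w \<longrightarrow>
      \<not> (fst (w ! i) = fst (w ! Suc i) \<and> snd (w ! i) \<noteq> snd (w ! Suc i)))"

definition free_group :: "'a set \<Rightarrow> ('a \<times> bool) list monoid" where
  "free_group S = \<lparr>carrier = {w. set w \<subseteq> S \<times> UNIV \<and> reduced_word w},
                   mult = (\<lambda>v w. word_reduce (v @ w)),
                   one = []\<rparr>"

definition free_gen :: "'a \<Rightarrow> ('a \<times> bool) list" where
  "free_gen s = [(s, True)]"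

definition markov_topology :: "'a topology \<Rightarrow> ('a \<times> bool) list topology" where
  "markov_topology S = (THE T. group_topology (free_group (topspace S)) T \<and>
      continuous_map S T free_gen \<and>
      (\<forall>T'. group_topology (free_group (topspace S)) T' \<and> continuous_map S T' free_gen
            \<longrightarrow> (\<forall>U. openin T' U \<longrightarrow> openin T U)))"

definition mult_word :: "('g, 'm) monoid_scheme \<Rightarrow> ('g \<times> bool) list \<Rightarrow> 'g" where
  "mult_word G w = foldr (\<lambda>(g, b) acc. (if b then g else inv\<^bsub>G\<^esub> g) \<otimes>\<^bsub>G\<^esub> acc) w \<one>\<^bsub>G\<^esub>"

definition tau_topology :: "('g, 'm) monoid_scheme \<Rightarrow> 'g topology \<Rightarrow> 'g topology" where
  "tau_topology G T = quotient_topology (markov_topology T) (mult_word G)"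

definition pi1_tau :: "'a topology \<Rightarrow> 'a \<Rightarrow> (real \<Rightarrow> 'a) set topology" where
  "pi1_tau X x = tau_topology (fundamental_group X x) (pi1_qtop X x)"

end

theory Submission
  imports Defs
begin


section \<open>Free group\<close>

definition canc :: "('a \<times> bool) \<Rightarrow> ('a \<times> bool) \<Rightarrow> bool" where
  "canc x y \<longleftrightarrow> fst x = fst y \<and> snd x \<noteq> snd y"

definition cx :: "('a \<times> bool) \<Rightarrow> ('a \<times> bool) list \<Rightarrow> ('a \<times> bool) list" where
  "cx x acc = (case acc of [] \<Rightarrow> [x] | y # ys \<Rightarrow> (if canc x y then ys else x # acc))"

definition flp :: "('a \<times> bool) \<Rightarrow> ('a \<times> bool)" where
  "flp x = (fst x, \<not> snd x)"

lemma word_reduce_foldr: "word_reduce xs = foldr cx xs []"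
  unfolding word_reduce_def cx_def canc_def by (rule arg_cong[where f="\<lambda>f. foldr f xs []"]) (auto simp: fun_eq_iff)

lemma reduced_word_Nil [simp]: "reduced_word []"
  by (simp add: reduced_word_def)

lemma reduced_word_Cons:
  "reduced_word (x # w) \<longleftrightarrow> reduced_word w \<and> (w \<noteq> [] \<longrightarrow> \<not> canc x (hd w))"
proof
  assume a: "reduced_word (x # w)"
  have "reduced_word w"
    unfolding reduced_word_def
  proof (intro allI impI)
    fix i assume "Suc i < length w"
    with a[unfolded reduced_word_def, rule_format, of "Suc i"] show
      "\<not> (fst (w ! i) = fst (w ! Suc i) \<and> snd (w ! i) \<noteq> snd (w ! Suc i))" by simp
  qed
  moreover have "w \<noteq> [] \<longrightarrow> \<not> canc x (hd w)"
    using a[unfolded reduced_word_def, rule_format, of 0] by (cases w) (auto simp: canc_def)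
  ultimately show "reduced_word w \<and> (w \<noteq> [] \<longrightarrow> \<not> canc x (hd w))" by blast
next
  assume a: "reduced_word w \<and> (w \<noteq> [] \<longrightarrow> \<not> canc x (hd w))"
  show "reduced_word (x # w)"
    unfolding reduced_word_def
  proof (intro allI impI)
    fix i assume i: "Suc i < length (x # w)"
    show "\<not> (fst ((x # w) ! i) = fst ((x # w) ! Suc i) \<and> snd ((x # w) ! i) \<noteq> snd ((x # w) ! Suc i))"
    proof (cases i)
      case 0 then show ?thesis using a i by (cases w) (auto simp: canc_def)
    next
      case (Suc j) then show ?thesis using a i unfolding reduced_word_def by auto
    qed
  qed
qed

lemma cx_reduced: "reduced_word acc \<Longrightarrow> reduced_word (cx x acc)"
  by (cases acc) (auto simp: cx_def reduced_word_Cons)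

lemma foldr_cx_reduced: "reduced_word acc \<Longrightarrow> reduced_word (foldr cx w acc)"
  by (induction w) (auto simp: cx_reduced)

lemma cx_set: "set (cx x acc) \<subseteq> insert x (set acc)"
  by (cases acc) (auto simp: cx_def)

lemma foldr_cx_set: "set (foldr cx w acc) \<subseteq> set w \<union> set acc"
  by (induction w) (use cx_set in fastforce)+

lemma cx_cancel: "reduced_word acc \<Longrightarrow> cx (flp x) (cx x acc) = acc"
proof (cases acc)
  case Nil then show ?thesis by (simp add: cx_def canc_def flp_def)
next
  case (Cons y ys)
  assume r: "reduced_word acc"
  show ?thesis
  proof (cases "canc x y")
    case True
    then have y: "y = flp x" by (cases x, cases y) (auto simp: canc_def flp_def)
    show ?thesis
    proof (cases ys)
      case Nil then show ?thesis using Cons True y by (simp add: cx_def)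
    next
      case (Cons z zs)
      with r \<open>acc = y # ys\<close> have "\<not> canc y z" by (simp add: reduced_word_Cons)
      then show ?thesis using Cons \<open>acc = y # ys\<close> True y by (simp add: cx_def)
    qed
  next
    case False
    then have "cx x acc = x # acc" using Cons by (simp add: cx_def)
    moreover have "cx (flp x) (x # acc) = acc" by (simp add: cx_def canc_def flp_def)
    ultimately show ?thesis by simp
  qed
qed

lemma flp_flp [simp]: "flp (flp x) = x"
  by (simp add: flp_def)

lemma cx_cancel': "reduced_word acc \<Longrightarrow> cx x (cx (flp x) acc) = acc"
  using cx_cancel[of acc "flp x"] by simp

lemma reduced_fixed: "reduced_word w \<Longrightarrow> foldr cx w [] = w"
proof (induction w)
  case Nil then show ?case by simp
next
  case (Cons x w)
  then have "reduced_word w" "w \<noteq> [] \<longrightarrow> \<not> canc x (hd w)" by (auto simp: reduced_word_Cons)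
  with Cons show ?case by (cases w) (auto simp: cx_def)
qed

lemma foldr_cx_key:
  assumes "reduced_word w" "reduced_word acc"
  shows "foldr cx (cx x w) acc = cx x (foldr cx w acc)"
proof (cases w)
  case Nil then show ?thesis by (simp add: cx_def)
next
  case (Cons y ys)
  show ?thesis
  proof (cases "canc x y")
    case True
    then have y: "y = flp x" by (cases x, cases y) (auto simp: canc_def flp_def)
    have "reduced_word (foldr cx ys acc)" using assms by (intro foldr_cx_reduced)
    have e: "cx x w = ys" using Cons True y by (simp add: cx_def)
    show ?thesis using Cons y e cx_cancel'[OF \<open>reduced_word (foldr cx ys acc)\<close>, of x] by simp
  next
    case False
    then show ?thesis using Cons by (simp add: cx_def)
  qed
qed

lemma foldr_cx_assoc:
  assumes "reduced_word v" "reduced_word w"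
  shows "foldr cx (foldr cx u v) w = foldr cx u (foldr cx v w)"
  using assms
proof (induction u)
  case Nil then show ?case by simp
next
  case (Cons x u)
  have "foldr cx (cx x (foldr cx u v)) w = cx x (foldr cx (foldr cx u v) w)"
    using Cons by (intro foldr_cx_key foldr_cx_reduced)
  then show ?case using Cons by simp
qed

lemma foldr_cx_inv:
  assumes "reduced_word acc"
  shows "foldr cx (rev (map flp w)) (foldr cx w acc) = acc"
  using assms
proof (induction w)
  case Nil then show ?case by simp
next
  case (Cons x w)
  have r: "reduced_word (foldr cx w acc)" using Cons by (intro foldr_cx_reduced)
  show ?case using Cons r by (simp add: cx_cancel)
qed

lemma free_group_group: "group (free_group S)"
proof (rule groupI)
  let ?F = "free_group S"
  have wr: "word_reduce (u @ v) = foldr cx u v" if "reduced_word v" for u v :: "('a \<times> bool) list"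
    using that by (simp add: word_reduce_foldr reduced_fixed)
  show "x \<otimes>\<^bsub>?F\<^esub> y \<in> carrier ?F" if "x \<in> carrier ?F" "y \<in> carrier ?F" for x y
    using that foldr_cx_set[of x y] foldr_cx_reduced[of y x]
    by (auto simp: free_group_def wr)
  show "\<one>\<^bsub>?F\<^esub> \<in> carrier ?F" by (simp add: free_group_def)
  show "x \<otimes>\<^bsub>?F\<^esub> y \<otimes>\<^bsub>?F\<^esub> z = x \<otimes>\<^bsub>?F\<^esub> (y \<otimes>\<^bsub>?F\<^esub> z)"
    if "x \<in> carrier ?F" "y \<in> carrier ?F" "z \<in> carrier ?F" for x y z
    using that foldr_cx_reduced[of y x] foldr_cx_reduced[of z y]
    by (simp add: free_group_def wr foldr_cx_assoc)
  show "\<one>\<^bsub>?F\<^esub> \<otimes>\<^bsub>?F\<^esub> x = x" if "x \<in> carrier ?F" for x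
    using that by (simp add: free_group_def word_reduce_foldr reduced_fixed)
  show "\<exists>y\<in>carrier ?F. y \<otimes>\<^bsub>?F\<^esub> x = \<one>\<^bsub>?F\<^esub>" if "x \<in> carrier ?F" for x
  proof (intro bexI)
    let ?y = "word_reduce (rev (map flp x))"
    have rx: "reduced_word x" "set x \<subseteq> S \<times> UNIV" using that by (auto simp: free_group_def)
    have "set (rev (map flp x)) \<subseteq> S \<times> UNIV" using rx by (auto simp: flp_def)
    then show "?y \<in> carrier ?F"
      using foldr_cx_set[of "rev (map flp x)" "[]"] foldr_cx_reduced[of "[]" "rev (map flp x)"]
      by (auto simp: free_group_def word_reduce_foldr)
    have "?y \<otimes>\<^bsub>?F\<^esub> x = foldr cx (foldr cx (rev (map flp x)) []) x"
      using rx by (simp add: free_group_def word_reduce_foldr reduced_fixed)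
    also have "\<dots> = foldr cx (rev (map flp x)) x"
      using foldr_cx_assoc[of "[]" x "rev (map flp x)"] rx by simp
    also have "\<dots> = foldr cx (rev (map flp x)) (foldr cx x [])"
      using rx by (simp add: reduced_fixed)
    also have "\<dots> = []" by (simp add: foldr_cx_inv)
    finally show "?y \<otimes>\<^bsub>?F\<^esub> x = \<one>\<^bsub>?F\<^esub>" by (simp add: free_group_def)
  qed
qed

section \<open>Multiplication epimorphism\<close>

definition lv :: "('g, 'm) monoid_scheme \<Rightarrow> ('g \<times> bool) \<Rightarrow> 'g" where
  "lv G x = (if snd x then fst x else inv\<^bsub>G\<^esub> (fst x))"

lemma mult_word_Nil [simp]: "mult_word G [] = \<one>\<^bsub>G\<^esub>"
  by (simp add: mult_word_def)

lemma mult_word_Cons [simp]: "mult_word G (x # w) = lv G x \<otimes>\<^bsub>G\<^esub> mult_word G w"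
  by (cases x) (simp add: mult_word_def lv_def)

context group begin

lemma lv_closed: "fst x \<in> carrier G \<Longrightarrow> lv G x \<in> carrier G"
  by (simp add: lv_def)

lemma mult_word_closed: "set w \<subseteq> carrier G \<times> UNIV \<Longrightarrow> mult_word G w \<in> carrier G"
  by (induction w) (auto simp: lv_closed)

lemma lv_flp: "fst x \<in> carrier G \<Longrightarrow> lv G x \<otimes> lv G (flp x) = \<one>"
  by (auto simp: lv_def flp_def)

lemma mult_word_cx:
  assumes "fst x \<in> carrier G" "set acc \<subseteq> carrier G \<times> UNIV"
  shows "mult_word G (cx x acc) = lv G x \<otimes> mult_word G acc"
proof (cases acc)
  case Nil then show ?thesis using assms by (simp add: cx_def lv_closed)
next
  case (Cons y ys)
  show ?thesis
  proof (cases "canc x y")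
    case True
    then have y: "y = flp x" by (cases x, cases y) (auto simp: canc_def flp_def)
    have c: "mult_word G ys \<in> carrier G" "lv G y \<in> carrier G" using assms Cons
      by (auto intro!: mult_word_closed lv_closed)
    have "lv G x \<otimes> (lv G y \<otimes> mult_word G ys) = (lv G x \<otimes> lv G y) \<otimes> mult_word G ys"
      using c assms by (simp add: m_assoc lv_closed)
    also have "\<dots> = mult_word G ys" using y assms c by (simp add: lv_flp)
    finally show ?thesis using Cons True by (simp add: cx_def)
  next
    case False then show ?thesis using Cons by (simp add: cx_def)
  qed
qed

lemma mult_word_foldr:
  assumes "set v \<subseteq> carrier G \<times> UNIV" "set acc \<subseteq> carrier G \<times> UNIV"
  shows "mult_word G (foldr cx v acc) = mult_word G v \<otimes> mult_word G acc"
  using assms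
proof (induction v)
  case Nil then show ?case by (simp add: mult_word_closed)
next
  case (Cons x v)
  have s: "set (foldr cx v acc) \<subseteq> carrier G \<times> UNIV" using foldr_cx_set[of v acc] Cons by auto
  have "mult_word G (foldr cx (x # v) acc) = lv G x \<otimes> mult_word G (foldr cx v acc)"
    using Cons s mult_word_cx[of x "foldr cx v acc"] by (auto simp: mem_Times_iff)
  also have "\<dots> = lv G x \<otimes> (mult_word G v \<otimes> mult_word G acc)" using Cons by simp
  also have "\<dots> = mult_word G (x # v) \<otimes> mult_word G acc"
    using Cons by (auto simp: mem_Times_iff m_assoc lv_closed mult_word_closed)
  finally show ?case .
qed

lemma mult_word_hom: "mult_word G \<in> hom (free_group (carrier G)) G"
proof (rule homI)
  fix x assume "x \<in> carrier (free_group (carrier G))"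
  then show "mult_word G x \<in> carrier G" by (auto simp: free_group_def intro!: mult_word_closed)
next
  fix x y assume xy: "x \<in> carrier (free_group (carrier G))" "y \<in> carrier (free_group (carrier G))"
  then have "word_reduce (x @ y) = foldr cx x y"
    by (simp add: word_reduce_foldr reduced_fixed free_group_def)
  then show "mult_word G (x \<otimes>\<^bsub>free_group (carrier G)\<^esub> y) = mult_word G x \<otimes> mult_word G y"
    using xy by (simp add: free_group_def mult_word_foldr)
qed

lemma mult_word_gen: "g \<in> carrier G \<Longrightarrow> mult_word G (free_gen g) = g"
  by (simp add: free_gen_def lv_def)

lemma mult_word_surj: "mult_word G ` carrier (free_group (carrier G)) = carrier G"
proof
  show "mult_word G ` carrier (free_group (carrier G)) \<subseteq> carrier G"
    using mult_word_hom by (auto simp: hom_def)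
  show "carrier G \<subseteq> mult_word G ` carrier (free_group (carrier G))"
  proof
    fix g assume g: "g \<in> carrier G"
    have "free_gen g \<in> carrier (free_group (carrier G))"
      using g by (simp add: free_gen_def free_group_def reduced_word_def)
    then show "g \<in> mult_word G ` carrier (free_group (carrier G))"
      using mult_word_gen[OF g] by force
  qed
qed

end

lemma free_gen_carrier: "g \<in> S \<Longrightarrow> free_gen g \<in> carrier (free_group S)"
  by (simp add: free_gen_def free_group_def reduced_word_def)




section \<open>Quotient topology\<close>

lemma istopology_quotient:
  "istopology (\<lambda>U. U \<subseteq> f ` topspace X \<and> openin X {x \<in> topspace X. f x \<in> U})"
proof -
  have i: "S \<inter> T \<subseteq> f ` topspace X \<and> openin X {x \<in> topspace X. f x \<in> S \<inter> T}"
    if a: "S \<subseteq> f ` topspace X \<and> openin X {x \<in> topspace X. f x \<in> S}"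
    "T \<subseteq> f ` topspace X \<and> openin X {x \<in> topspace X. f x \<in> T}" for S T
  proof -
    have "{x \<in> topspace X. f x \<in> S \<inter> T} = {x \<in> topspace X. f x \<in> S} \<inter> {x \<in> topspace X. f x \<in> T}" by auto
    then show ?thesis using a by auto
  qed
  have u: "\<Union>K \<subseteq> f ` topspace X \<and> openin X {x \<in> topspace X. f x \<in> \<Union>K}"
    if a: "\<forall>S\<in>K. S \<subseteq> f ` topspace X \<and> openin X {x \<in> topspace X. f x \<in> S}" for K
  proof -
    have "{x \<in> topspace X. f x \<in> \<Union>K} = \<Union>((\<lambda>S. {x \<in> topspace X. f x \<in> S}) ` K)" by auto
    then show ?thesis using a by auto
  qed
  show ?thesis unfolding istopology_def using i u by blast
qed

lemma openin_quotient_topology: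
  "openin (quotient_topology X f) U \<longleftrightarrow> U \<subseteq> f ` topspace X \<and> openin X {x \<in> topspace X. f x \<in> U}"
  unfolding quotient_topology_def topology_inverse'[OF istopology_quotient] by simp

lemma topspace_quotient_topology [simp]: "topspace (quotient_topology X f) = f ` topspace X"
proof -
  have "{x \<in> topspace X. f x \<in> f ` topspace X} = topspace X" by auto
  then have "openin (quotient_topology X f) (f ` topspace X)"
    by (auto simp: openin_quotient_topology)
  then show ?thesis using openin_subset[of "quotient_topology X f"]
    by (metis (no_types, lifting) openin_quotient_topology openin_topspace subset_antisym)
qed

lemma quotient_map_quotient_topology: "quotient_map X (quotient_topology X f) f"
  unfolding quotient_map_def by (auto simp: openin_quotient_topology)

lemma continuous_map_quotient_topology: "continuous_map X (quotient_topology X f) f"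
  by (rule quotient_imp_continuous_map[OF quotient_map_quotient_topology])

definition indisc :: "'a set \<Rightarrow> 'a topology" where
  "indisc A = topology (\<lambda>U. U = {} \<or> U = A)"

lemma istopology_indisc: "istopology (\<lambda>U. U = {} \<or> U = A)"
  unfolding istopology_def
proof (intro conjI allI impI)
  fix K :: "'a set set" assume "\<forall>S\<in>K. S = {} \<or> S = A"
  then have "K \<subseteq> {{}, A}" by auto
  then show "\<Union>K = {} \<or> \<Union>K = A" by auto
qed auto

lemma openin_indisc: "openin (indisc A) U \<longleftrightarrow> U = {} \<or> U = A"
  unfolding indisc_def topology_inverse'[OF istopology_indisc] by simp

lemma topspace_indisc [simp]: "topspace (indisc A) = A"
  unfolding topspace_def by (auto simp: openin_indisc)

lemma continuous_map_indisc: "f \<in> topspace X \<rightarrow> A \<Longrightarrow> continuous_map X (indisc A) f"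
proof -
  assume a: "f \<in> topspace X \<rightarrow> A"
  then have "{x \<in> topspace X. f x \<in> A} = topspace X" by auto
  then show ?thesis unfolding continuous_map_def using a by (auto simp: openin_indisc)
qed

lemma continuous_map_generated:
  assumes "f \<in> topspace X \<rightarrow> \<Union>B" "\<And>U. U \<in> B \<Longrightarrow> openin X {x \<in> topspace X. f x \<in> U}"
  shows "continuous_map X (topology_generated_by B) f"
  unfolding continuous_map_def
proof (intro conjI allI impI)
  show "f \<in> topspace X \<rightarrow> topspace (topology_generated_by B)" using assms by simp
  fix V assume "openin (topology_generated_by B) V"
  then have "generate_topology_on B V" by (rule openin_topology_generated_by)
  then show "openin X {x \<in> topspace X. f x \<in> V}"
  proof induction
    case Empty then show ?case by simp
  next
    case (Int a b)
    have "{x \<in> topspace X. f x \<in> a \<inter> b} = {x \<in> topspace X. f x \<in> a} \<inter> {x \<in> topspace X. f x \<in> b}" by auto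
    then show ?case using Int by auto
  next
    case (UN K)
    have "{x \<in> topspace X. f x \<in> \<Union>K} = \<Union>((\<lambda>k. {x \<in> topspace X. f x \<in> k}) ` K)" by auto
    then show ?case using UN by auto
  next
    case (Basis s) then show ?case using assms by auto
  qed
qed

lemma continuous_map_id_finer:
  assumes "topspace M = topspace T" "\<And>U. openin T U \<Longrightarrow> openin M U"
  shows "continuous_map M T (\<lambda>x. x)"
  unfolding continuous_map_def
proof (intro conjI allI impI)
  show "(\<lambda>x. x) \<in> topspace M \<rightarrow> topspace T" using assms by auto
  fix U assume "openin T U"
  moreover have "{x \<in> topspace M. x \<in> U} = U" using openin_subset[OF \<open>openin T U\<close>] assms by auto
  ultimately show "openin M {x \<in> topspace M. x \<in> U}" using assms by simp
qed

section \<open>Topological groups\<close>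

context
  fixes G (structure) and T
  assumes gt: "group_topology G T"
begin

lemma gt_group: "group G" using gt by (simp add: group_topology_def)
lemma gt_topspace: "topspace T = carrier G" using gt by (simp add: group_topology_def)
lemma gt_mult: "continuous_map (prod_topology T T) T (\<lambda>(a, b). a \<otimes> b)"
  using gt by (simp add: group_topology_def)
lemma gt_inv: "continuous_map T T (\<lambda>a. inv a)"
  using gt by (simp add: group_topology_def)

lemma gt_rtrans: assumes c: "c \<in> carrier G" shows "continuous_map T T (\<lambda>x. x \<otimes> c)"
proof -
  have "continuous_map T (prod_topology T T) (\<lambda>x. (x, c))"
    using c gt_topspace by (intro continuous_map_pairedI) (auto simp: id_def[symmetric])
  from continuous_map_compose[OF this gt_mult] show ?thesis by (simp add: o_def)
qed

lemma gt_rtrans_open: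
  assumes U: "openin T U" and c: "c \<in> carrier G"
  shows "openin T ((\<lambda>x. x \<otimes> c) ` U)"
proof -
  interpret group G by (rule gt_group)
  have Uc: "U \<subseteq> carrier G" using openin_subset[OF U] gt_topspace by simp
  have "(\<lambda>x. x \<otimes> c) ` U = {x \<in> topspace T. x \<otimes> inv c \<in> U}"
  proof
    show "(\<lambda>x. x \<otimes> c) ` U \<subseteq> {x \<in> topspace T. x \<otimes> inv c \<in> U}"
      using Uc c gt_topspace by (auto simp: m_assoc)
    show "{x \<in> topspace T. x \<otimes> inv c \<in> U} \<subseteq> (\<lambda>x. x \<otimes> c) ` U"
    proof
      fix x assume x: "x \<in> {x \<in> topspace T. x \<otimes> inv c \<in> U}"
      then have "x = (x \<otimes> inv c) \<otimes> c" using c gt_topspace by (simp add: m_assoc)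
      then show "x \<in> (\<lambda>x. x \<otimes> c) ` U" using x by blast
    qed
  qed
  moreover have "openin T {x \<in> topspace T. x \<otimes> inv c \<in> U}"
    using gt_rtrans[of "inv c"] c U by (simp add: continuous_map_def)
  ultimately show ?thesis by simp
qed

end

lemma open_map_prod:
  assumes "open_map X X' f" "open_map Y Y' g"
  shows "open_map (prod_topology X Y) (prod_topology X' Y') (\<lambda>(a, b). (f a, g b))"
  unfolding open_map_def
proof (intro allI impI)
  fix W assume W: "openin (prod_topology X Y) W"
  show "openin (prod_topology X' Y') ((\<lambda>(a, b). (f a, g b)) ` W)"
    unfolding openin_prod_topology_alt
  proof (intro allI impI)
    fix x' y' assume "(x', y') \<in> (\<lambda>(a, b). (f a, g b)) ` W"
    then obtain x y where xy: "(x, y) \<in> W" "x' = f x" "y' = g y" by auto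
    have h: "\<forall>x y. (x, y) \<in> W \<longrightarrow> (\<exists>U V. openin X U \<and> openin Y V \<and> x \<in> U \<and> y \<in> V \<and> U \<times> V \<subseteq> W)"
      using W by (simp only: openin_prod_topology_alt)
    obtain U V where UV: "openin X U" "openin Y V" "x \<in> U" "y \<in> V" "U \<times> V \<subseteq> W"
      using h[rule_format, OF xy(1)] by (elim exE conjE) simp
    show "\<exists>U V. openin X' U \<and> openin Y' V \<and> x' \<in> U \<and> y' \<in> V \<and> U \<times> V \<subseteq> (\<lambda>(a, b). (f a, g b)) ` W"
    proof (intro exI conjI)
      show "openin X' (f ` U)" "openin Y' (g ` V)" using assms UV by (auto simp: open_map_def)
      show "x' \<in> f ` U" "y' \<in> g ` V" using xy UV by auto
      show "f ` U \<times> g ` V \<subseteq> (\<lambda>(a, b). (f a, g b)) ` W" using UV by force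
    qed
  qed
qed

lemma quotient_group_topology:
  assumes gt: "group_topology F M" and G: "group G" and h: "q \<in> hom F G"
    and surj: "q ` carrier F = carrier G"
  shows "group_topology G (quotient_topology M q)"
proof -
  let ?Q = "quotient_topology M q"
  interpret F: group F by (rule gt_group[OF gt])
  interpret G: group G by (rule G)
  interpret h: group_hom F G q using h by (simp add: group_hom_def group_hom_axioms_def G F.group_axioms)
  have tsM: "topspace M = carrier F" by (rule gt_topspace[OF gt])
  have tsQ: "topspace ?Q = carrier G" using surj tsM by simp
  have qq: "quotient_map M ?Q q" by (rule quotient_map_quotient_topology)
  have qc: "continuous_map M ?Q q" by (rule continuous_map_quotient_topology)
  have om: "open_map M ?Q q"
    unfolding open_map_def
  proof (intro allI impI)
    fix U assume U: "openin M U"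
    have Uc: "U \<subseteq> carrier F" using openin_subset[OF U] tsM by simp
    let ?K = "{k \<in> carrier F. q k = \<one>\<^bsub>G\<^esub>}"
    have "{x \<in> topspace M. q x \<in> q ` U} = (\<Union>k\<in>?K. (\<lambda>x. x \<otimes>\<^bsub>F\<^esub> k) ` U)"
    proof
      show "{x \<in> topspace M. q x \<in> q ` U} \<subseteq> (\<Union>k\<in>?K. (\<lambda>x. x \<otimes>\<^bsub>F\<^esub> k) ` U)"
      proof
        fix x assume "x \<in> {x \<in> topspace M. q x \<in> q ` U}"
        then obtain u where x: "x \<in> carrier F" and u: "u \<in> U" "q x = q u" using tsM by auto
        have uc: "u \<in> carrier F" using u Uc by auto
        have kK: "inv\<^bsub>F\<^esub> u \<otimes>\<^bsub>F\<^esub> x \<in> ?K" using x uc u by simp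
        have "x = u \<otimes>\<^bsub>F\<^esub> (inv\<^bsub>F\<^esub> u \<otimes>\<^bsub>F\<^esub> x)" using x uc by (simp add: F.m_assoc[symmetric])
        then have "x \<in> (\<lambda>y. y \<otimes>\<^bsub>F\<^esub> (inv\<^bsub>F\<^esub> u \<otimes>\<^bsub>F\<^esub> x)) ` U" using u(1) by (rule image_eqI)
        then show "x \<in> (\<Union>k\<in>?K. (\<lambda>x. x \<otimes>\<^bsub>F\<^esub> k) ` U)" by (rule UN_I[OF kK])
      qed
      show "(\<Union>k\<in>?K. (\<lambda>x. x \<otimes>\<^bsub>F\<^esub> k) ` U) \<subseteq> {x \<in> topspace M. q x \<in> q ` U}"
        using Uc tsM by force
    qed
    moreover have "openin M (\<Union>k\<in>?K. (\<lambda>x. x \<otimes>\<^bsub>F\<^esub> k) ` U)"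
      using gt_rtrans_open[OF gt U] by auto
    moreover have "q ` U \<subseteq> q ` topspace M" using openin_subset[OF U] by auto
    ultimately show "openin ?Q (q ` U)" by (simp add: openin_quotient_topology)
  qed
  have mult: "continuous_map (prod_topology ?Q ?Q) ?Q (\<lambda>(a, b). a \<otimes>\<^bsub>G\<^esub> b)"
  proof (rule continuous_compose_quotient_map)
    let ?p = "\<lambda>(a, b). (q a, q b)"
    show "quotient_map (prod_topology M M) (prod_topology ?Q ?Q) ?p"
    proof (subst continuous_open_quotient_map)
      show "continuous_map (prod_topology M M) (prod_topology ?Q ?Q) ?p"
        using qc by (simp add: continuous_map_prod_top)
      show "open_map (prod_topology M M) (prod_topology ?Q ?Q) ?p"
        by (rule open_map_prod[OF om om])
      show "?p ` topspace (prod_topology M M) = topspace (prod_topology ?Q ?Q)"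
        using surj tsM by (simp add: image_paired_Times)
    qed
    have "continuous_map (prod_topology M M) ?Q (q \<circ> (\<lambda>(a, b). a \<otimes>\<^bsub>F\<^esub> b))"
      using gt_mult[OF gt] qc by (rule continuous_map_compose)
    then show "continuous_map (prod_topology M M) ?Q ((\<lambda>(a, b). a \<otimes>\<^bsub>G\<^esub> b) \<circ> ?p)"
      by (rule continuous_map_eq) (auto simp: tsM)
  qed
  have inv: "continuous_map ?Q ?Q (\<lambda>a. inv\<^bsub>G\<^esub> a)"
  proof (rule continuous_compose_quotient_map[OF qq])
    have "continuous_map M ?Q (q \<circ> (\<lambda>a. inv\<^bsub>F\<^esub> a))"
      using gt_inv[OF gt] qc by (rule continuous_map_compose)
    then show "continuous_map M ?Q ((\<lambda>a. inv\<^bsub>G\<^esub> a) \<circ> q)"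
      by (rule continuous_map_eq) (auto simp: tsM)
  qed
  show ?thesis unfolding group_topology_def using G tsQ mult inv by simp
qed

lemma pullback_group_topology:
  assumes G: "group G" and gt: "group_topology H S" and h: "h \<in> hom G H"
  shows "group_topology G (pullback_topology (carrier G) h S)"
proof -
  let ?P = "pullback_topology (carrier G) h S"
  interpret G: group G by (rule G)
  interpret H: group H by (rule gt_group[OF gt])
  interpret h: group_hom G H h using h by (simp add: group_hom_def group_hom_axioms_def G H.group_axioms)
  have tsS: "topspace S = carrier H" by (rule gt_topspace[OF gt])
  have tsP: "topspace ?P = carrier G" using tsS by (auto simp: topspace_pullback_topology)
  have hc: "continuous_map ?P S h"
    using continuous_map_pullback[OF continuous_map_id, of "carrier G" h S] by simp
  have mult: "continuous_map (prod_topology ?P ?P) ?P (\<lambda>(a, b). a \<otimes>\<^bsub>G\<^esub> b)"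
  proof (rule continuous_map_pullback')
    have "continuous_map (prod_topology ?P ?P) (prod_topology S S) (\<lambda>(a, b). (h a, h b))"
      using hc by (simp add: continuous_map_prod_top)
    from continuous_map_compose[OF this gt_mult[OF gt]]
    show "continuous_map (prod_topology ?P ?P) S (h \<circ> (\<lambda>(a, b). a \<otimes>\<^bsub>G\<^esub> b))"
      by (rule continuous_map_eq) (auto simp: tsP)
    show "topspace (prod_topology ?P ?P) \<subseteq> (\<lambda>(a, b). a \<otimes>\<^bsub>G\<^esub> b) -` carrier G"
      using tsP by auto
  qed
  have inv: "continuous_map ?P ?P (\<lambda>a. inv\<^bsub>G\<^esub> a)"
  proof (rule continuous_map_pullback')
    from continuous_map_compose[OF hc gt_inv[OF gt]]
    show "continuous_map ?P S (h \<circ> (\<lambda>a. inv\<^bsub>G\<^esub> a))"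
      by (rule continuous_map_eq) (auto simp: tsP)
    show "topspace ?P \<subseteq> (\<lambda>a. inv\<^bsub>G\<^esub> a) -` carrier G" using tsP by auto
  qed
  show ?thesis unfolding group_topology_def using G tsP mult inv by simp
qed

section \<open>Existence of the Markov topology\<close>

definition mk_fam :: "'a topology \<Rightarrow> ('a \<times> bool) list topology set" where
  "mk_fam S = {T. group_topology (free_group (topspace S)) T \<and> continuous_map S T free_gen}"

definition mk_top :: "'a topology \<Rightarrow> ('a \<times> bool) list topology" where
  "mk_top S = topology_generated_by {U. \<exists>T\<in>mk_fam S. openin T U}"

lemma indisc_group_topology: assumes "group G" shows "group_topology G (indisc (carrier G))"
proof -
  interpret group G by (rule assms)
  show ?thesis unfolding group_topology_def
    by (auto intro!: continuous_map_indisc assms)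
qed

lemma indisc_mk_fam: "indisc (carrier (free_group (topspace S))) \<in> mk_fam S"
  unfolding mk_fam_def
  by (auto intro!: indisc_group_topology free_group_group continuous_map_indisc free_gen_carrier)

lemma mk_fam_topspace: "T \<in> mk_fam S \<Longrightarrow> topspace T = carrier (free_group (topspace S))"
  by (simp add: mk_fam_def group_topology_def)

lemma topspace_mk_top: "topspace (mk_top S) = carrier (free_group (topspace S))"
proof -
  have "\<Union>{U. \<exists>T\<in>mk_fam S. openin T U} = carrier (free_group (topspace S))"
  proof
    show "\<Union>{U. \<exists>T\<in>mk_fam S. openin T U} \<subseteq> carrier (free_group (topspace S))"
      using openin_subset mk_fam_topspace by blast
    have "carrier (free_group (topspace S)) \<in> {U. \<exists>T\<in>mk_fam S. openin T U}"
      by (intro CollectI bexI[OF _ indisc_mk_fam[of S]]) (simp add: openin_indisc)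
    then show "carrier (free_group (topspace S)) \<subseteq> \<Union>{U. \<exists>T\<in>mk_fam S. openin T U}"
      by blast
  qed
  then show ?thesis by (simp add: mk_top_def)
qed

lemma mk_top_finer: "T \<in> mk_fam S \<Longrightarrow> openin T U \<Longrightarrow> openin (mk_top S) U"
  unfolding mk_top_def openin_topology_generated_by_iff
  by (rule generate_topology_on.Basis) auto

lemma mk_top_id: "T \<in> mk_fam S \<Longrightarrow> continuous_map (mk_top S) T (\<lambda>x. x)"
  by (rule continuous_map_id_finer) (auto simp: topspace_mk_top mk_fam_topspace mk_top_finer)

lemma mk_top_in_fam: "mk_top S \<in> mk_fam S"
proof -
  let ?F = "free_group (topspace S)"
  let ?B = "{U. \<exists>T\<in>mk_fam S. openin T U}"
  let ?M = "mk_top S"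
  interpret F: group ?F by (rule free_group_group)
  have tsM: "topspace ?M = carrier ?F" by (rule topspace_mk_top)
  have UB: "\<Union>?B = carrier ?F" using tsM by (simp add: mk_top_def)
  have mult: "continuous_map (prod_topology ?M ?M) (topology_generated_by ?B) (\<lambda>(a, b). a \<otimes>\<^bsub>?F\<^esub> b)"
  proof (rule continuous_map_generated)
    show "(\<lambda>(a, b). a \<otimes>\<^bsub>?F\<^esub> b) \<in> topspace (prod_topology ?M ?M) \<rightarrow> \<Union>?B"
      using UB tsM by auto
    fix U assume "U \<in> ?B"
    then obtain T where T: "T \<in> mk_fam S" "openin T U" by auto
    have c1: "continuous_map (prod_topology ?M ?M) (prod_topology T T) (\<lambda>(a, b). (a, b))"
      using mk_top_id[OF T(1)] continuous_map_prod_top[of ?M ?M T T "\<lambda>x. x" "\<lambda>x. x"] by simp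
    have "continuous_map (prod_topology T T) T (\<lambda>(a, b). a \<otimes>\<^bsub>?F\<^esub> b)"
      using T(1) by (simp add: mk_fam_def group_topology_def)
    from continuous_map_compose[OF c1 this] have
      "continuous_map (prod_topology ?M ?M) T (\<lambda>(a, b). a \<otimes>\<^bsub>?F\<^esub> b)"
      by (simp add: o_def case_prod_unfold)
    then show "openin (prod_topology ?M ?M) {x \<in> topspace (prod_topology ?M ?M). (case x of (a, b) \<Rightarrow> a \<otimes>\<^bsub>?F\<^esub> b) \<in> U}"
      using T(2) by (simp add: continuous_map_def)
  qed
  have inv: "continuous_map ?M (topology_generated_by ?B) (\<lambda>a. inv\<^bsub>?F\<^esub> a)"
  proof (rule continuous_map_generated)
    show "(\<lambda>a. inv\<^bsub>?F\<^esub> a) \<in> topspace ?M \<rightarrow> \<Union>?B"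
      using UB tsM by auto
    fix U assume "U \<in> ?B"
    then obtain T where T: "T \<in> mk_fam S" "openin T U" by auto
    have "continuous_map T T (\<lambda>a. inv\<^bsub>?F\<^esub> a)"
      using T(1) by (simp add: mk_fam_def group_topology_def)
    from continuous_map_compose[OF mk_top_id[OF T(1)] this]
    have "continuous_map ?M T (\<lambda>a. inv\<^bsub>?F\<^esub> a)" by (simp add: o_def)
    then show "openin ?M {x \<in> topspace ?M. inv\<^bsub>?F\<^esub> x \<in> U}"
      using T(2) by (simp add: continuous_map_def)
  qed
  have gen: "continuous_map S (topology_generated_by ?B) free_gen"
  proof (rule continuous_map_generated)
    show "free_gen \<in> topspace S \<rightarrow> \<Union>?B" using UB by (auto intro: free_gen_carrier)
    fix U assume "U \<in> ?B"
    then obtain T where T: "T \<in> mk_fam S" "openin T U" by auto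
    then show "openin S {x \<in> topspace S. free_gen x \<in> U}"
      by (auto simp: mk_fam_def continuous_map_def)
  qed
  show ?thesis unfolding mk_fam_def group_topology_def
    using free_group_group tsM mult inv gen by (simp add: mk_top_def)
qed

lemma markov_eq: "markov_topology S = mk_top S"
  unfolding markov_topology_def
proof (rule the_equality)
  show "group_topology (free_group (topspace S)) (mk_top S) \<and> continuous_map S (mk_top S) free_gen \<and>
    (\<forall>T'. group_topology (free_group (topspace S)) T' \<and> continuous_map S T' free_gen \<longrightarrow>
          (\<forall>U. openin T' U \<longrightarrow> openin (mk_top S) U))"
    using mk_top_in_fam[of S] mk_top_finer[of _ S] by (auto simp: mk_fam_def)
  fix T assume T: "group_topology (free_group (topspace S)) T \<and> continuous_map S T free_gen \<and>
    (\<forall>T'. group_topology (free_group (topspace S)) T' \<and> continuous_map S T' free_gen \<longrightarrow>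
          (\<forall>U. openin T' U \<longrightarrow> openin T U))"
  then have "T \<in> mk_fam S" by (simp add: mk_fam_def)
  show "T = mk_top S"
    unfolding topology_eq
    using T mk_top_in_fam[of S] mk_top_finer[OF \<open>T \<in> mk_fam S\<close>] by (auto simp: mk_fam_def)
qed

lemma markov_group_topology: "group_topology (free_group (topspace S)) (markov_topology S)"
  and markov_gen: "continuous_map S (markov_topology S) free_gen"
  using mk_top_in_fam[of S] by (auto simp: markov_eq mk_fam_def)

lemma markov_finest:
  "group_topology (free_group (topspace S)) T \<Longrightarrow> continuous_map S T free_gen \<Longrightarrow> openin T U
   \<Longrightarrow> openin (markov_topology S) U"
  unfolding markov_eq by (rule mk_top_finer) (auto simp: mk_fam_def)

section \<open>The \<tau> topology\<close>

context
  fixes G (structure) and T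
  assumes G: "group G" and tsT: "topspace T = carrier G"
begin

lemma tau_group_topology: "group_topology G (tau_topology G T)"
  unfolding tau_topology_def
  using markov_group_topology[of T] group.mult_word_hom[OF G] group.mult_word_surj[OF G] G tsT
  by (intro quotient_group_topology) auto

lemma tau_topspace [simp]: "topspace (tau_topology G T) = carrier G"
  using gt_topspace[OF tau_group_topology] .

lemma tau_coarser: "continuous_map T (tau_topology G T) (\<lambda>x. x)"
proof -
  have "continuous_map T (tau_topology G T) (mult_word G \<circ> free_gen)"
    unfolding tau_topology_def
    by (rule continuous_map_compose[OF markov_gen continuous_map_quotient_topology])
  then show ?thesis by (rule continuous_map_eq) (simp add: group.mult_word_gen[OF G] tsT)
qed

lemma tau_universal:
  assumes S: "group_topology G S" and id: "continuous_map T S (\<lambda>x. x)"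
  shows "continuous_map (tau_topology G T) S (\<lambda>x. x)"
proof -
  let ?F = "free_group (carrier G)"
  let ?P = "pullback_topology (carrier ?F) (mult_word G) S"
  have hom: "mult_word G \<in> hom ?F G" by (rule group.mult_word_hom[OF G])
  have P: "group_topology ?F ?P"
    by (rule pullback_group_topology[OF free_group_group S hom])
  have genP: "continuous_map T ?P free_gen"
  proof (rule continuous_map_pullback')
    show "continuous_map T S (mult_word G \<circ> free_gen)"
      using id by (rule continuous_map_eq) (simp add: group.mult_word_gen[OF G] tsT)
    show "topspace T \<subseteq> free_gen -` carrier ?F" using tsT free_gen_carrier by auto
  qed
  have qM: "continuous_map (markov_topology T) S (mult_word G)"
    unfolding continuous_map_def
  proof (intro conjI allI impI)
    show "mult_word G \<in> topspace (markov_topology T) \<rightarrow> topspace S"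
      using gt_topspace[OF markov_group_topology[of T]] gt_topspace[OF S] hom tsT
      by (auto simp: hom_def)
    fix U assume U: "openin S U"
    have "openin ?P (mult_word G -` U \<inter> carrier ?F)"
      using U by (auto simp: openin_pullback_topology)
    then have "openin (markov_topology T) (mult_word G -` U \<inter> carrier ?F)"
      using markov_finest[of T ?P] P genP tsT by auto
    moreover have "{x \<in> topspace (markov_topology T). mult_word G x \<in> U} = mult_word G -` U \<inter> carrier ?F"
      using gt_topspace[OF markov_group_topology[of T]] tsT by auto
    ultimately show "openin (markov_topology T) {x \<in> topspace (markov_topology T). mult_word G x \<in> U}"
      by simp
  qed
  show ?thesis
    unfolding tau_topology_def
    by (rule continuous_compose_quotient_map[OF quotient_map_quotient_topology]) (simp add: o_def qM)
qed

end

lemma tau_functor: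
  assumes G: "group G" and H: "group H" and tsG: "topspace TG = carrier G"
    and tsH: "topspace TH = carrier H" and h: "h \<in> hom G H" and hc: "continuous_map TG TH h"
  shows "continuous_map (tau_topology G TG) (tau_topology H TH) h"
proof -
  let ?S = "pullback_topology (carrier G) h (tau_topology H TH)"
  have S: "group_topology G ?S"
    by (rule pullback_group_topology[OF G tau_group_topology[OF H tsH] h])
  have "continuous_map TG ?S (\<lambda>x. x)"
  proof (rule continuous_map_pullback')
    show "continuous_map TG (tau_topology H TH) (h \<circ> (\<lambda>x. x))"
      using continuous_map_compose[OF hc tau_coarser[OF H tsH]] by (simp add: o_def)
    show "topspace TG \<subseteq> (\<lambda>x. x) -` carrier G" using tsG by auto
  qed
  then have "continuous_map (tau_topology G TG) ?S (\<lambda>x. x)"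
    by (rule tau_universal[OF G tsG S])
  from continuous_map_compose[OF this continuous_map_pullback[OF continuous_map_id]]
  show ?thesis by (simp add: o_def)
qed




section \<open>Loop space topology\<close>

definition sbL :: "'a topology \<Rightarrow> 'a \<Rightarrow> (real \<Rightarrow> 'a) set set" where
  "sbL X x = {{\<alpha> \<in> loops X x. \<alpha> ` K \<subseteq> W} | K W.
                compactin (top_of_set {0..1::real}) K \<and> openin X W}"

definition basicL :: "'a topology \<Rightarrow> 'a \<Rightarrow> (real \<Rightarrow> 'a) set \<Rightarrow> bool" where
  "basicL X x V \<longleftrightarrow> (\<exists>\<F>. finite \<F> \<and> \<F> \<subseteq> sbL X x \<and> V = loops X x \<inter> \<Inter>\<F>)"

lemma loop_space_eq: "loop_space X x = topology (arbitrary union_of basicL X x)"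
  unfolding loop_space_def basicL_def sbL_def union_of_def arbitrary_def
  by (rule arg_cong[where f=topology]) (auto simp: fun_eq_iff)

lemma basicL_Int: "basicL X x S \<Longrightarrow> basicL X x T \<Longrightarrow> basicL X x (S \<inter> T)"
  unfolding basicL_def
proof (elim exE conjE)
  fix F1 F2 assume "finite F1" "F1 \<subseteq> sbL X x" "S = loops X x \<inter> \<Inter>F1"
    "finite F2" "F2 \<subseteq> sbL X x" "T = loops X x \<inter> \<Inter>F2"
  then show "\<exists>\<F>. finite \<F> \<and> \<F> \<subseteq> sbL X x \<and> S \<inter> T = loops X x \<inter> \<Inter>\<F>"
    by (intro exI[of _ "F1 \<union> F2"]) auto
qed

lemma openin_loop_space: "openin (loop_space X x) U \<longleftrightarrow> (arbitrary union_of basicL X x) U"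
  unfolding loop_space_eq
  by (rule fun_cong[OF topology_inverse'[OF istopology_base]]) (rule basicL_Int)

lemma basicL_open: "basicL X x V \<Longrightarrow> openin (loop_space X x) V"
  unfolding openin_loop_space by (rule arbitrary_union_of_inc)

lemma topspace_loop_space [simp]: "topspace (loop_space X x) = loops X x"
proof
  have bl: "basicL X x (loops X x)" unfolding basicL_def by (intro exI[of _ "{}"]) auto
  show "loops X x \<subseteq> topspace (loop_space X x)"
    using openin_subset[OF basicL_open[OF bl]] by simp
  show "topspace (loop_space X x) \<subseteq> loops X x"
  proof
    fix a assume "a \<in> topspace (loop_space X x)"
    then obtain U where "openin (loop_space X x) U" "a \<in> U" unfolding topspace_def by auto
    then obtain \<U> where "\<U> \<subseteq> Collect (basicL X x)" "\<Union>\<U> = U"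
      unfolding openin_loop_space union_of_def by auto
    then show "a \<in> loops X x" using \<open>a \<in> U\<close> unfolding basicL_def by auto
  qed
qed

lemma loops_compose:
  "\<alpha> \<in> loops X x \<Longrightarrow> continuous_map X Z f \<Longrightarrow> f x = z \<Longrightarrow> f \<circ> \<alpha> \<in> loops Z z"
  by (auto simp: loops_def pathin_compose)

lemma loop_space_compose:
  assumes f: "continuous_map X Z f" and fx: "f x = z"
  shows "continuous_map (loop_space X x) (loop_space Z z) (\<lambda>\<alpha>. f \<circ> \<alpha>)"
proof -
  have B: "openin (loop_space X x) {\<alpha> \<in> loops X x. f \<circ> \<alpha> \<in> V}" if V: "basicL Z z V" for V
  proof -
    obtain \<F> where F: "finite \<F>" "\<F> \<subseteq> sbL Z z" "V = loops Z z \<inter> \<Inter>\<F>"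
      using V unfolding basicL_def by auto
    define g where "g S = {\<alpha> \<in> loops X x. f \<circ> \<alpha> \<in> S}" for S
    have gs: "g S \<in> sbL X x" if S: "S \<in> \<F>" for S
    proof -
      obtain K W where KW: "S = {\<gamma> \<in> loops Z z. \<gamma> ` K \<subseteq> W}" "compactin (top_of_set {0..1::real}) K" "openin Z W"
        using S F(2) unfolding sbL_def by auto
      have K: "K \<subseteq> {0..1}" using compactin_subset_topspace[OF KW(2)] by simp
      have W': "openin X {y \<in> topspace X. f y \<in> W}" using f KW(3) by (simp add: continuous_map_def)
      have "g S = {\<alpha> \<in> loops X x. \<alpha> ` K \<subseteq> {y \<in> topspace X. f y \<in> W}}"
      proof -
        have "((f \<circ> \<alpha>) ` K \<subseteq> W) \<longleftrightarrow> \<alpha> ` K \<subseteq> {y \<in> topspace X. f y \<in> W}" if "\<alpha> \<in> loops X x" for \<alpha>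
        proof -
          have "\<alpha> ` K \<subseteq> topspace X" using that K path_image_subset_topspace[of X \<alpha>]
            by (auto simp: loops_def)
          then show ?thesis by auto
        qed
        then show ?thesis unfolding g_def KW(1) using loops_compose[OF _ f fx] by auto
      qed
      then show ?thesis unfolding sbL_def using KW(2) W' by blast
    qed
    have "{\<alpha> \<in> loops X x. f \<circ> \<alpha> \<in> V} = loops X x \<inter> \<Inter>(g ` \<F>)"
      unfolding F(3) g_def using loops_compose[OF _ f fx] by auto
    moreover have "basicL X x (loops X x \<inter> \<Inter>(g ` \<F>))"
      unfolding basicL_def using F(1) gs by blast
    ultimately show ?thesis using basicL_open by metis
  qed
  show ?thesis
    unfolding continuous_map_def
  proof (intro conjI allI impI)
    show "(\<lambda>\<alpha>. f \<circ> \<alpha>) \<in> topspace (loop_space X x) \<rightarrow> topspace (loop_space Z z)"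
      using loops_compose[OF _ f fx] by auto
    fix U assume "openin (loop_space Z z) U"
    then obtain \<U> where U: "\<U> \<subseteq> Collect (basicL Z z)" "\<Union>\<U> = U"
      unfolding openin_loop_space union_of_def by auto
    have "{\<alpha> \<in> topspace (loop_space X x). f \<circ> \<alpha> \<in> U} = \<Union>((\<lambda>V. {\<alpha> \<in> loops X x. f \<circ> \<alpha> \<in> V}) ` \<U>)"
      using U by auto
    moreover have "openin (loop_space X x) (\<Union>((\<lambda>V. {\<alpha> \<in> loops X x. f \<circ> \<alpha> \<in> V}) ` \<U>))"
      using U B by (intro openin_Union) auto
    ultimately show "openin (loop_space X x) {\<alpha> \<in> topspace (loop_space X x). f \<circ> \<alpha> \<in> U}" by simp
  qed
qed

lemma loop_homotopic_loops:
  assumes "loop_homotopic X x \<alpha> \<beta>" shows "\<alpha> \<in> loops X x" "\<beta> \<in> loops X x"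
  using homotopic_with_imp_continuous_maps[OF assms[unfolded loop_homotopic_def]]
    homotopic_with_imp_property[OF assms[unfolded loop_homotopic_def]]
  by (auto simp: loops_def pathin_def)

lemma loop_homotopic_refl: "\<alpha> \<in> loops X x \<Longrightarrow> loop_homotopic X x \<alpha> \<alpha>"
  by (simp add: loop_homotopic_def loops_def pathin_def)

lemma loop_homotopic_sym: "loop_homotopic X x \<alpha> \<beta> \<Longrightarrow> loop_homotopic X x \<beta> \<alpha>"
  unfolding loop_homotopic_def by (rule homotopic_with_symD)

lemma loop_homotopic_trans:
  "loop_homotopic X x \<alpha> \<beta> \<Longrightarrow> loop_homotopic X x \<beta> \<gamma> \<Longrightarrow> loop_homotopic X x \<alpha> \<gamma>"
  unfolding loop_homotopic_def by (rule homotopic_with_trans)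

lemma loop_homotopic_eq:
  assumes "loop_homotopic X x \<alpha> \<beta>" "\<And>t. t \<in> {0..1} \<Longrightarrow> \<alpha>' t = \<alpha> t" "\<And>t. t \<in> {0..1} \<Longrightarrow> \<beta>' t = \<beta> t"
  shows "loop_homotopic X x \<alpha>' \<beta>'"
  using assms unfolding loop_homotopic_def
  by (intro homotopic_with_eq[OF assms(1)[unfolded loop_homotopic_def]]) auto

lemma loop_class_mem: "\<alpha> \<in> loops X x \<Longrightarrow> \<alpha> \<in> loop_class X x \<alpha>"
  by (simp add: loop_class_def loop_homotopic_refl)

lemma loop_class_eqI: "loop_homotopic X x \<alpha> \<beta> \<Longrightarrow> loop_class X x \<alpha> = loop_class X x \<beta>"
  unfolding loop_class_def
  by (meson loop_homotopic_sym loop_homotopic_trans)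

lemma loop_class_eq_iff:
  assumes "\<alpha> \<in> loops X x" "\<beta> \<in> loops X x"
  shows "loop_class X x \<alpha> = loop_class X x \<beta> \<longleftrightarrow> loop_homotopic X x \<alpha> \<beta>"
proof
  assume "loop_class X x \<alpha> = loop_class X x \<beta>"
  then have "\<beta> \<in> loop_class X x \<alpha>" using loop_class_mem[OF assms(2)] by simp
  then show "loop_homotopic X x \<alpha> \<beta>" by (simp add: loop_class_def)
qed (rule loop_class_eqI)

section \<open>Joins and reparametrizations\<close>

lemma loop_join_loops:
  assumes a: "\<alpha> \<in> loops X x" and b: "\<beta> \<in> loops X x"
  shows "loop_join \<alpha> \<beta> \<in> loops X x"
proof -
  let ?T01 = "top_of_set {0..1::real}"
  have g1: "continuous_map ?T01 X \<alpha>" and g2: "continuous_map ?T01 X \<beta>"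
    and e: "\<alpha> 0 = x" "\<alpha> 1 = x" "\<beta> 0 = x" "\<beta> 1 = x"
    using a b by (auto simp: loops_def pathin_def)
  let ?g = "\<lambda>x. if x \<le> 1/2 then (\<alpha> \<circ> (\<lambda>t. 2 * t)) x else (\<beta> \<circ> (\<lambda>t. 2 * t -1)) x"
  have "continuous_map ?T01 X ?g"
  proof (intro continuous_map_cases_le continuous_map_compose, force, force)
    show "continuous_map (subtopology ?T01 {x \<in> topspace ?T01. x \<le> 1/2}) ?T01 ((*) 2)"
      by (auto simp: continuous_map_in_subtopology continuous_map_from_subtopology)
    have "continuous_map
           (subtopology (top_of_set {0..1}) {x. 0 \<le> x \<and> x \<le> 1 \<and> 1 \<le> x * 2})
           euclideanreal (\<lambda>t. 2 * t - 1)"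
      by (intro continuous_intros) (force intro: continuous_map_from_subtopology)
    then show "continuous_map (subtopology ?T01 {x \<in> topspace ?T01. 1/2 \<le> x}) ?T01 (\<lambda>t. 2 * t - 1)"
      by (force simp: continuous_map_in_subtopology)
    show "(\<alpha> \<circ> (*) 2) x = (\<beta> \<circ> (\<lambda>t. 2 * t - 1)) x" if "x \<in> topspace ?T01" "x = 1/2" for x
    proof -
      have "2 * x = 1" using that by simp
      then show ?thesis using e by simp
    qed
  qed (auto simp: g1 g2)
  moreover have "?g = loop_join \<alpha> \<beta>" by (simp add: loop_join_def fun_eq_iff)
  ultimately show ?thesis using e by (simp add: loops_def pathin_def loop_join_def)
qed

lemma loop_join_homotopic:
  assumes ha: "loop_homotopic X x \<alpha> \<alpha>'" and hb: "loop_homotopic X x \<beta> \<beta>'"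
  shows "loop_homotopic X x (loop_join \<alpha> \<beta>) (loop_join \<alpha>' \<beta>')"
proof -
  let ?I = "top_of_set {0..1::real}"
  let ?X01 = "prod_topology ?I ?I"
  obtain k1 k2
    where contk1: "continuous_map ?X01 X k1" and contk2: "continuous_map ?X01 X k2"
      and k: "\<forall>t. k1 (0, t) = \<alpha> t" "\<forall>t. k1 (1, t) = \<alpha>' t" "\<forall>t. k2 (0, t) = \<beta> t" "\<forall>t. k2 (1, t) = \<beta>' t"
      and P: "\<forall>s\<in>{0..1}. k1 (s, 0) = x \<and> k1 (s, 1) = x" "\<forall>s\<in>{0..1}. k2 (s, 0) = x \<and> k2 (s, 1) = x"
    using ha hb by (auto simp: loop_homotopic_def homotopic_with_def)
  define k where "k \<equiv> \<lambda>y. if snd y \<le> 1/2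
                             then (k1 \<circ> (\<lambda>y. (fst y, 2 * snd y))) y
                             else (k2 \<circ> (\<lambda>y. (fst y, 2 * snd y - 1))) y"
  show ?thesis
    unfolding loop_homotopic_def homotopic_with_def
  proof (intro exI conjI)
    show "continuous_map ?X01 X k"
      unfolding k_def
    proof (rule continuous_map_cases_le)
      show snd: "continuous_map ?X01 euclideanreal snd"
        using continuous_map_snd continuous_map_in_subtopology by blast
      show "continuous_map ?X01 euclideanreal (\<lambda>x. 1/2)"
        by simp
      have fst: "continuous_map ?X01 euclideanreal fst"
        using continuous_map_fst continuous_map_in_subtopology by blast
      show "continuous_map (subtopology ?X01 {y \<in> topspace ?X01. snd y \<le> 1/2}) X
               (k1 \<circ> (\<lambda>y. (fst y, 2 * snd y)))"
        apply (intro fst snd continuous_map_compose [OF _ contk1] continuous_intros continuous_map_into_subtopology continuous_map_from_subtopology | simp)+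
        by (force simp: prod_topology_subtopology)
      show "continuous_map (subtopology ?X01 {y \<in> topspace ?X01. 1/2 \<le> snd y}) X
               (k2 \<circ> (\<lambda>y. (fst y, 2 * snd y - 1)))"
        apply (intro fst snd continuous_map_compose [OF _ contk2] continuous_intros continuous_map_into_subtopology continuous_map_from_subtopology | simp)+
        by (force simp: prod_topology_subtopology)
      show "(k1 \<circ> (\<lambda>y. (fst y, 2 * snd y))) y = (k2 \<circ> (\<lambda>y. (fst y, 2 * snd y - 1))) y"
        if "y \<in> topspace ?X01" and "snd y = 1/2" for y
      proof -
        have "2 * snd y = 1" "fst y \<in> {0..1}" using that by auto
        then show ?thesis using P by simp
      qed
    qed
    show "\<forall>t. k (0, t) = loop_join \<alpha> \<beta> t"
      by (simp add: k k_def loop_join_def)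
    show "\<forall>t. k (1, t) = loop_join \<alpha>' \<beta>' t"
      by (simp add: k k_def loop_join_def)
    show "\<forall>s\<in>{0..1}. (\<lambda>t. k (s, t)) 0 = x \<and> (\<lambda>t. k (s, t)) 1 = x"
      using P by (simp add: k_def)
  qed
qed

lemma loop_reparam:
  assumes a: "pathin X \<alpha>"
    and r: "continuous_on {0..1} r" "r ` {0..1} \<subseteq> {0..1}"
    and r': "continuous_on {0..1} r'" "r' ` {0..1} \<subseteq> {0..1}"
    and e: "r 0 = r' 0" "r 1 = r' 1" "\<alpha> (r 0) = x" "\<alpha> (r 1) = x"
  shows "loop_homotopic X x (\<alpha> \<circ> r) (\<alpha> \<circ> r')"
proof -
  let ?I = "top_of_set {0..1::real}"
  define k where "k = (\<lambda>y::real \<times> real. (1 - fst y) * r (snd y) + fst y * r' (snd y))"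
  have kc: "continuous_on ({0..1} \<times> {0..1}) k"
  proof -
    have "continuous_on ({0..1} \<times> {0..1}) (\<lambda>y::real\<times>real. r (snd y))"
      by (rule continuous_on_compose2[OF r(1) continuous_on_snd]) auto
    moreover have "continuous_on ({0..1} \<times> {0..1}) (\<lambda>y::real\<times>real. r' (snd y))"
      by (rule continuous_on_compose2[OF r'(1) continuous_on_snd]) auto
    ultimately show ?thesis unfolding k_def by (intro continuous_intros)
  qed
  have kr: "k y \<in> {0..1}" if "y \<in> {0..1} \<times> {0..1}" for y
  proof -
    obtain s t where y: "y = (s, t)" by (cases y)
    have s: "0 \<le> s" "s \<le> 1" and t: "t \<in> {0..1}" using that y by auto
    have "r t \<in> {0..1}" "r' t \<in> {0..1}" using r(2) r'(2) t by blast+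
    then have "0 \<le> (1 - s) * r t + s * r' t" "(1 - s) * r t \<le> (1 - s) * 1" "s * r' t \<le> s * 1"
      using s by (auto intro!: mult_left_mono simp del: mult_1_right)
    then have "0 \<le> (1 - s) * r t + s * r' t" "(1 - s) * r t + s * r' t \<le> (1 - s) * 1 + s * 1"
      by (simp_all only: add_mono)
    then have "0 \<le> (1 - s) * r t + s * r' t" "(1 - s) * r t + s * r' t \<le> 1" by simp_all
    then show ?thesis using y by (simp add: k_def)
  qed
  have "continuous_map (prod_topology ?I ?I) ?I k"
    using kc kr by (auto simp: continuous_map_in_subtopology)
  then have hc: "continuous_map (prod_topology ?I ?I) X (\<alpha> \<circ> k)"
    using a by (intro continuous_map_compose) (auto simp: pathin_def)
  show ?thesis
    unfolding loop_homotopic_def homotopic_with_def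
  proof (intro exI conjI)
    show "continuous_map (prod_topology ?I ?I) X (\<alpha> \<circ> k)" by (rule hc)
    show "\<forall>t. (\<alpha> \<circ> k) (0, t) = (\<alpha> \<circ> r) t" by (simp add: k_def)
    show "\<forall>t. (\<alpha> \<circ> k) (1, t) = (\<alpha> \<circ> r') t" by (simp add: k_def)
    have "(1 - s) * c + s * c = c" for s c :: real by (simp add: algebra_simps)
    then show "\<forall>s\<in>{0..1}. (\<lambda>t. (\<alpha> \<circ> k) (s, t)) 0 = x \<and> (\<lambda>t. (\<alpha> \<circ> k) (s, t)) 1 = x"
      using e by (simp add: k_def)
  qed
qed

lemma loops_const: "x \<in> topspace X \<Longrightarrow> (\<lambda>t. x) \<in> loops X x"
  by (simp add: loops_def)

lemma loop_rev: assumes "\<alpha> \<in> loops X x" shows "(\<lambda>t. \<alpha> (1 - t)) \<in> loops X x"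
proof -
  have "continuous_map (top_of_set {0..1}) (top_of_set {0..1::real}) (\<lambda>t. 1 - t)"
    by (auto simp: continuous_map_in_subtopology intro!: continuous_intros)
  moreover have "continuous_map (top_of_set {0..1}) X \<alpha>" using assms by (simp add: loops_def pathin_def)
  ultimately have "pathin X (\<alpha> \<circ> (\<lambda>t. 1 - t))"
    unfolding pathin_def by (rule continuous_map_compose)
  then show ?thesis using assms by (simp add: loops_def o_def)
qed

lemma htp_via_reparam:
  assumes a: "\<alpha> \<in> loops X x"
    and r: "continuous_on {0..1} r" "r ` {0..1} \<subseteq> {0..1}"
    and r': "continuous_on {0..1} r'" "r' ` {0..1} \<subseteq> {0..1}"
    and e: "r 0 = r' 0" "r 1 = r' 1" "\<alpha> (r 0) = x" "\<alpha> (r 1) = x"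
    and p: "\<And>t. t \<in> {0..1} \<Longrightarrow> p t = \<alpha> (r t)" and q: "\<And>t. t \<in> {0..1} \<Longrightarrow> q t = \<alpha> (r' t)"
  shows "loop_homotopic X x p q"
proof -
  have h: "loop_homotopic X x (\<alpha> \<circ> r) (\<alpha> \<circ> r')"
    using a by (intro loop_reparam r r' e) (simp add: loops_def)
  show ?thesis by (rule loop_homotopic_eq[OF h]) (simp_all add: p q)
qed

lemma htp_lid: assumes a: "\<alpha> \<in> loops X x" shows "loop_homotopic X x (loop_join (\<lambda>t. x) \<alpha>) \<alpha>"
proof (rule htp_via_reparam[OF a, of "\<lambda>t. max 0 (2*t - 1)" "\<lambda>t. t"])
  show "continuous_on {0..1} (\<lambda>t::real. max 0 (2*t - 1))" by (intro continuous_intros)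
  show "(\<lambda>t::real. max 0 (2*t - 1)) ` {0..1} \<subseteq> {0..1}" by auto
  show "loop_join (\<lambda>t. x) \<alpha> t = \<alpha> (max 0 (2 * t - 1))" if "t \<in> {0..1}" for t
  proof (cases "t \<le> 1/2")
    case True
    then have "max 0 (2 * t - 1) = 0" by simp
    then show ?thesis using a True by (simp add: loop_join_def loops_def)
  next
    case False
    then have "max 0 (2 * t - 1) = 2 * t - 1" by simp
    then show ?thesis using a False by (simp add: loop_join_def loops_def)
  qed
qed (use a in \<open>auto simp: loops_def\<close>)

lemma htp_rid: assumes a: "\<alpha> \<in> loops X x" shows "loop_homotopic X x (loop_join \<alpha> (\<lambda>t. x)) \<alpha>"
proof (rule htp_via_reparam[OF a, of "\<lambda>t. min 1 (2*t)" "\<lambda>t. t"])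
  show "continuous_on {0..1} (\<lambda>t::real. min 1 (2*t))" by (intro continuous_intros)
  show "(\<lambda>t::real. min 1 (2*t)) ` {0..1} \<subseteq> {0..1}" by auto
  show "loop_join \<alpha> (\<lambda>t. x) t = \<alpha> (min 1 (2 * t))" if "t \<in> {0..1}" for t
  proof (cases "t \<le> 1/2")
    case True
    then have "min 1 (2 * t) = 2 * t" by simp
    then show ?thesis using a True by (simp add: loop_join_def loops_def)
  next
    case False
    then have "min 1 (2 * t) = 1" by simp
    then show ?thesis using a False by (simp add: loop_join_def loops_def)
  qed
qed (use a in \<open>auto simp: loops_def\<close>)

lemma htp_linv: assumes a: "\<alpha> \<in> loops X x"
  shows "loop_homotopic X x (loop_join (\<lambda>t. \<alpha> (1 - t)) \<alpha>) (\<lambda>t. x)"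
proof (rule htp_via_reparam[OF a, of "\<lambda>t. \<bar>2*t - 1\<bar>" "\<lambda>t. 1"])
  show "continuous_on {0..1} (\<lambda>t::real. \<bar>2*t - 1\<bar>)" by (intro continuous_intros)
  show "(\<lambda>t::real. \<bar>2*t - 1\<bar>) ` {0..1} \<subseteq> {0..1}" by auto
  show "loop_join (\<lambda>t. \<alpha> (1 - t)) \<alpha> t = \<alpha> \<bar>2 * t - 1\<bar>" if "t \<in> {0..1}" for t
  proof (cases "t \<le> 1/2")
    case True
    then have "\<bar>2 * t - 1\<bar> = 1 - 2 * t" by simp
    then show ?thesis using True by (simp add: loop_join_def)
  next
    case False
    then have "\<bar>2 * t - 1\<bar> = 2 * t - 1" by simp
    then show ?thesis using False by (simp add: loop_join_def)
  qed
qed (use a in \<open>auto simp: loops_def\<close>)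

lemma htp_assoc:
  assumes a: "\<alpha> \<in> loops X x" and b: "\<beta> \<in> loops X x" and c: "\<gamma> \<in> loops X x"
  shows "loop_homotopic X x (loop_join (loop_join \<alpha> \<beta>) \<gamma>) (loop_join \<alpha> (loop_join \<beta> \<gamma>))"
proof -
  let ?c = "loop_join \<alpha> (loop_join \<beta> \<gamma>)"
  let ?r = "\<lambda>t::real. min (2*t) (min (t + 1/4) ((t + 1)/2))"
  have cl: "?c \<in> loops X x" using a b c by (intro loop_join_loops)
  show ?thesis
  proof (rule htp_via_reparam[OF cl, of ?r "\<lambda>t. t"])
    show "continuous_on {0..1} ?r" by (intro continuous_intros) auto
    show "?r ` {0..1} \<subseteq> {0..1}" by (auto simp: min_def)
    show "loop_join (loop_join \<alpha> \<beta>) \<gamma> t = ?c (?r t)" if "t \<in> {0..1}" for t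
    proof -
      consider "t \<le> 1/4" | "1/4 < t" "t \<le> 1/2" | "1/2 < t" by linarith
      then show ?thesis
      proof cases
        case 1 then show ?thesis by (simp add: loop_join_def min_def algebra_simps)
      next
        case 2
        then have "?r t = t + 1/4" by (simp add: min_def)
        then show ?thesis using 2 by (simp add: loop_join_def algebra_simps)
      next
        case 3
        then have "?r t = (t + 1)/2" by (simp add: min_def)
        moreover have "2 * ((t + 1) / 2) - 1 = t" by (simp add: field_simps)
        ultimately show ?thesis using 3 by (simp add: loop_join_def)
      qed
    qed
  qed (use cl in \<open>auto simp: loops_def\<close>)
qed




section \<open>The fundamental group\<close>

lemma fg_carrier [simp]: "carrier (fundamental_group X x) = loop_class X x ` loops X x"
  by (simp add: fundamental_group_def)

lemma fg_one [simp]: "\<one>\<^bsub>fundamental_group X x\<^esub> = loop_class X x (\<lambda>t. x)"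
  by (simp add: fundamental_group_def)

lemma fg_mult:
  assumes a: "\<alpha> \<in> loops X x" and b: "\<beta> \<in> loops X x"
  shows "loop_class X x \<alpha> \<otimes>\<^bsub>fundamental_group X x\<^esub> loop_class X x \<beta> = loop_class X x (loop_join \<alpha> \<beta>)"
proof -
  have "{\<gamma> \<in> loops X x. \<exists>\<alpha>'\<in>loop_class X x \<alpha>. \<exists>\<beta>'\<in>loop_class X x \<beta>. loop_homotopic X x (loop_join \<alpha>' \<beta>') \<gamma>}
        = loop_class X x (loop_join \<alpha> \<beta>)"
  proof
    show "{\<gamma> \<in> loops X x. \<exists>\<alpha>'\<in>loop_class X x \<alpha>. \<exists>\<beta>'\<in>loop_class X x \<beta>. loop_homotopic X x (loop_join \<alpha>' \<beta>') \<gamma>}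
        \<subseteq> loop_class X x (loop_join \<alpha> \<beta>)"
    proof
      fix \<gamma> assume "\<gamma> \<in> {\<gamma> \<in> loops X x. \<exists>\<alpha>'\<in>loop_class X x \<alpha>. \<exists>\<beta>'\<in>loop_class X x \<beta>. loop_homotopic X x (loop_join \<alpha>' \<beta>') \<gamma>}"
      then obtain \<alpha>' \<beta>' where g: "\<gamma> \<in> loops X x" and h: "loop_homotopic X x \<alpha> \<alpha>'" "loop_homotopic X x \<beta> \<beta>'"
        "loop_homotopic X x (loop_join \<alpha>' \<beta>') \<gamma>"
        by (auto simp: loop_class_def)
      have "loop_homotopic X x (loop_join \<alpha> \<beta>) \<gamma>"
        using loop_homotopic_trans[OF loop_join_homotopic[OF h(1,2)] h(3)] .
      then show "\<gamma> \<in> loop_class X x (loop_join \<alpha> \<beta>)" using g by (simp add: loop_class_def)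
    qed
    show "loop_class X x (loop_join \<alpha> \<beta>) \<subseteq> {\<gamma> \<in> loops X x. \<exists>\<alpha>'\<in>loop_class X x \<alpha>. \<exists>\<beta>'\<in>loop_class X x \<beta>. loop_homotopic X x (loop_join \<alpha>' \<beta>') \<gamma>}"
      using loop_class_mem[OF a] loop_class_mem[OF b] by (auto simp: loop_class_def)
  qed
  then show ?thesis by (simp add: fundamental_group_def)
qed

lemma fg_group:
  assumes x: "x \<in> topspace X"
  shows "group (fundamental_group X x)"
proof (rule groupI)
  let ?G = "fundamental_group X x"
  show "A \<otimes>\<^bsub>?G\<^esub> B \<in> carrier ?G" if hAB: "A \<in> carrier ?G" "B \<in> carrier ?G" for A B
  proof -
    obtain \<alpha> where "\<alpha> \<in> loops X x" "A = loop_class X x \<alpha>" using hAB(1) by auto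
    moreover obtain \<beta> where "\<beta> \<in> loops X x" "B = loop_class X x \<beta>" using hAB(2) by auto
    ultimately show ?thesis by (simp add: fg_mult loop_join_loops)
  qed
  show "\<one>\<^bsub>?G\<^esub> \<in> carrier ?G" using loops_const[OF x] by simp
  show "A \<otimes>\<^bsub>?G\<^esub> B \<otimes>\<^bsub>?G\<^esub> C = A \<otimes>\<^bsub>?G\<^esub> (B \<otimes>\<^bsub>?G\<^esub> C)"
    if hyp: "A \<in> carrier ?G" "B \<in> carrier ?G" "C \<in> carrier ?G" for A B C
  proof -
    obtain \<alpha> \<beta> \<gamma> where l: "\<alpha> \<in> loops X x" "\<beta> \<in> loops X x" "\<gamma> \<in> loops X x"
      and e: "A = loop_class X x \<alpha>" "B = loop_class X x \<beta>" "C = loop_class X x \<gamma>"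
      using hyp by auto
    show ?thesis using l unfolding e
      by (simp add: fg_mult loop_join_loops loop_class_eqI htp_assoc)
  qed
  show "\<one>\<^bsub>?G\<^esub> \<otimes>\<^bsub>?G\<^esub> A = A" if hyp: "A \<in> carrier ?G" for A
  proof -
    obtain \<alpha> where l: "\<alpha> \<in> loops X x" and e: "A = loop_class X x \<alpha>" using hyp by auto
    show ?thesis using l loops_const[OF x] unfolding e
      by (simp add: fg_mult loop_class_eqI htp_lid)
  qed
  show "\<exists>B\<in>carrier ?G. B \<otimes>\<^bsub>?G\<^esub> A = \<one>\<^bsub>?G\<^esub>" if hyp: "A \<in> carrier ?G" for A
  proof -
    obtain \<alpha> where l: "\<alpha> \<in> loops X x" and e: "A = loop_class X x \<alpha>" using hyp by auto
    have r: "(\<lambda>t. \<alpha> (1 - t)) \<in> loops X x" by (rule loop_rev[OF l])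
    show ?thesis
    proof (intro bexI)
      show "loop_class X x (\<lambda>t. \<alpha> (1 - t)) \<otimes>\<^bsub>?G\<^esub> A = \<one>\<^bsub>?G\<^esub>"
        using l r unfolding e by (simp add: fg_mult loop_class_eqI htp_linv)
      show "loop_class X x (\<lambda>t. \<alpha> (1 - t)) \<in> carrier ?G" using r by simp
    qed
  qed
qed

section \<open>Induced homomorphisms\<close>

definition indm :: "'a topology \<Rightarrow> 'a \<Rightarrow> 'b topology \<Rightarrow> 'b \<Rightarrow> ('a \<Rightarrow> 'b) \<Rightarrow> (real \<Rightarrow> 'a) set \<Rightarrow> (real \<Rightarrow> 'b) set" where
  "indm X x Z z f A = {\<gamma> \<in> loops Z z. \<exists>\<alpha>\<in>A. loop_homotopic Z z (f \<circ> \<alpha>) \<gamma>}"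

lemma htp_compose:
  assumes "loop_homotopic X x \<alpha> \<beta>" "continuous_map X Z f" "f x = z"
  shows "loop_homotopic Z z (f \<circ> \<alpha>) (f \<circ> \<beta>)"
  using assms unfolding loop_homotopic_def
  by (intro homotopic_with_compose_continuous_map_left[OF assms(1)[unfolded loop_homotopic_def] assms(2)]) auto

lemma indm_class:
  assumes f: "continuous_map X Z f" and fx: "f x = z" and a: "\<alpha> \<in> loops X x"
  shows "indm X x Z z f (loop_class X x \<alpha>) = loop_class Z z (f \<circ> \<alpha>)"
proof
  show "indm X x Z z f (loop_class X x \<alpha>) \<subseteq> loop_class Z z (f \<circ> \<alpha>)"
  proof
    fix \<gamma> assume "\<gamma> \<in> indm X x Z z f (loop_class X x \<alpha>)"
    then obtain \<alpha>' where g: "\<gamma> \<in> loops Z z" and h: "loop_homotopic X x \<alpha> \<alpha>'" "loop_homotopic Z z (f \<circ> \<alpha>') \<gamma>"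
      by (auto simp: indm_def loop_class_def)
    have "loop_homotopic Z z (f \<circ> \<alpha>) \<gamma>"
      using loop_homotopic_trans[OF htp_compose[OF h(1) f fx] h(2)] .
    then show "\<gamma> \<in> loop_class Z z (f \<circ> \<alpha>)" using g by (simp add: loop_class_def)
  qed
  show "loop_class Z z (f \<circ> \<alpha>) \<subseteq> indm X x Z z f (loop_class X x \<alpha>)"
    using loop_class_mem[OF a] by (auto simp: indm_def loop_class_def)
qed

lemma compose_join: "f \<circ> loop_join \<alpha> \<beta> = loop_join (f \<circ> \<alpha>) (f \<circ> \<beta>)"
  by (simp add: fun_eq_iff loop_join_def)

lemma indm_hom:
  assumes x: "x \<in> topspace X" and f: "continuous_map X Z f" and fx: "f x = z"
  shows "indm X x Z z f \<in> hom (fundamental_group X x) (fundamental_group Z z)"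
proof (rule homI)
  fix A assume "A \<in> carrier (fundamental_group X x)"
  then obtain \<alpha> where l: "\<alpha> \<in> loops X x" and e: "A = loop_class X x \<alpha>" by auto
  show "indm X x Z z f A \<in> carrier (fundamental_group Z z)"
    using e l by (simp add: indm_class[OF f fx] loops_compose[OF _ f fx])
next
  fix A B assume "A \<in> carrier (fundamental_group X x)" "B \<in> carrier (fundamental_group X x)"
  then obtain \<alpha> \<beta> where l: "\<alpha> \<in> loops X x" "\<beta> \<in> loops X x" and e: "A = loop_class X x \<alpha>" "B = loop_class X x \<beta>"
    by auto
  show "indm X x Z z f (A \<otimes>\<^bsub>fundamental_group X x\<^esub> B) =
        indm X x Z z f A \<otimes>\<^bsub>fundamental_group Z z\<^esub> indm X x Z z f B"
    using l unfolding e
    by (simp add: fg_mult loop_join_loops indm_class[OF f fx] loops_compose[OF _ f fx] compose_join)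
qed

lemma pi1_qtop_topspace [simp]: "topspace (pi1_qtop X x) = carrier (fundamental_group X x)"
  by (simp add: pi1_qtop_def)

lemma indm_qtop_cont:
  assumes f: "continuous_map X Z f" and fx: "f x = z"
  shows "continuous_map (pi1_qtop X x) (pi1_qtop Z z) (indm X x Z z f)"
  unfolding pi1_qtop_def
proof (rule continuous_compose_quotient_map[OF quotient_map_quotient_topology])
  have "continuous_map (loop_space X x) (quotient_topology (loop_space Z z) (loop_class Z z))
          (loop_class Z z \<circ> (\<lambda>\<alpha>. f \<circ> \<alpha>))"
    by (rule continuous_map_compose[OF loop_space_compose[OF f fx] continuous_map_quotient_topology])
  then show "continuous_map (loop_space X x) (quotient_topology (loop_space Z z) (loop_class Z z))
          (indm X x Z z f \<circ> loop_class X x)"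
    by (rule continuous_map_eq) (simp add: indm_class[OF f fx])
qed

lemma pi1_tau_topspace [simp]:
  "x \<in> topspace X \<Longrightarrow> topspace (pi1_tau X x) = carrier (fundamental_group X x)"
  unfolding pi1_tau_def by (rule tau_topspace[OF fg_group pi1_qtop_topspace])

lemma pi1_tau_gt:
  "x \<in> topspace X \<Longrightarrow> group_topology (fundamental_group X x) (pi1_tau X x)"
  unfolding pi1_tau_def by (rule tau_group_topology[OF fg_group pi1_qtop_topspace])

lemma indm_tau_cont:
  assumes x: "x \<in> topspace X" and f: "continuous_map X Z f" and fx: "f x = z"
  shows "continuous_map (pi1_tau X x) (pi1_tau Z z) (indm X x Z z f)"
proof -
  have z: "z \<in> topspace Z" using f x fx by (auto simp: continuous_map_def)
  show ?thesis unfolding pi1_tau_def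
    by (rule tau_functor[OF fg_group[OF x] fg_group[OF z] pi1_qtop_topspace pi1_qtop_topspace
          indm_hom[OF x f fx] indm_qtop_cont[OF f fx]])
qed

section \<open>Products\<close>

lemma htp_pair:
  assumes "loop_homotopic X x0 a a'" "loop_homotopic Y y0 b b'"
  shows "loop_homotopic (prod_topology X Y) (x0, y0) (\<lambda>t. (a t, b t)) (\<lambda>t. (a' t, b' t))"
proof -
  obtain h1 where h1: "continuous_map (prod_topology (top_of_set {0..1::real}) (top_of_set {0..1::real})) X h1"
    "\<forall>t. h1 (0, t) = a t" "\<forall>t. h1 (1, t) = a' t" "\<forall>s\<in>{0..1}. h1 (s, 0) = x0 \<and> h1 (s, 1) = x0"
    using assms(1) unfolding loop_homotopic_def homotopic_with_def by blast
  obtain h2 where h2: "continuous_map (prod_topology (top_of_set {0..1::real}) (top_of_set {0..1::real})) Y h2"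
    "\<forall>t. h2 (0, t) = b t" "\<forall>t. h2 (1, t) = b' t" "\<forall>s\<in>{0..1}. h2 (s, 0) = y0 \<and> h2 (s, 1) = y0"
    using assms(2) unfolding loop_homotopic_def homotopic_with_def by blast
  show ?thesis
    unfolding loop_homotopic_def homotopic_with_def
    by (rule exI[of _ "\<lambda>z. (h1 z, h2 z)"]) (use h1 h2 in \<open>auto intro: continuous_map_pairedI\<close>)
qed

theorem main_result:
  fixes X :: "'a topology" and Y :: "'b topology" and x0 :: 'a and y0 :: 'b
  assumes x0: "x0 \<in> topspace X" and y0: "y0 \<in> topspace Y"
  shows "\<exists>\<phi>. \<phi> \<in> iso (fundamental_group (prod_topology X Y) (x0, y0))
                    (fundamental_group X x0 \<times>\<times> fundamental_group Y y0) \<and>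
             homeomorphic_map (pi1_tau (prod_topology X Y) (x0, y0))
                              (prod_topology (pi1_tau X x0) (pi1_tau Y y0)) \<phi> \<and>
             (\<forall>\<gamma> \<in> loops (prod_topology X Y) (x0, y0).
                \<phi> (loop_class (prod_topology X Y) (x0, y0) \<gamma>) =
                  (loop_class X x0 (fst \<circ> \<gamma>), loop_class Y y0 (snd \<circ> \<gamma>)))"
proof -
  let ?P = "prod_topology X Y"
  let ?p = "(x0, y0)"
  let ?G = "fundamental_group ?P ?p"
  let ?GX = "fundamental_group X x0"
  let ?GY = "fundamental_group Y y0"
  define iX where "iX = (\<lambda>x::'a. (x, y0))"
  define iY where "iY = (\<lambda>y::'b. (x0, y))"
  define \<phi> where "\<phi> = (\<lambda>A. (indm ?P ?p X x0 fst A, indm ?P ?p Y y0 snd A))"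
  define \<psi> where "\<psi> = (\<lambda>(a, b). indm X x0 ?P ?p iX a \<otimes>\<^bsub>?G\<^esub> indm Y y0 ?P ?p iY b)"
  have p: "?p \<in> topspace ?P" using x0 y0 by simp
  have cfst: "continuous_map ?P X fst" and csnd: "continuous_map ?P Y snd"
    by (rule continuous_map_fst, rule continuous_map_snd)
  have ciX: "continuous_map X ?P iX" unfolding iX_def
    using y0 by (intro continuous_map_pairedI) (auto simp: id_def[symmetric])
  have ciY: "continuous_map Y ?P iY" unfolding iY_def
    using x0 by (intro continuous_map_pairedI) (auto simp: id_def[symmetric])
  have iXp: "iX x0 = ?p" and iYp: "iY y0 = ?p" by (simp_all add: iX_def iY_def)
  have phi_class: "\<phi> (loop_class ?P ?p \<gamma>) = (loop_class X x0 (fst \<circ> \<gamma>), loop_class Y y0 (snd \<circ> \<gamma>))"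
    if hyp: "\<gamma> \<in> loops ?P ?p" for \<gamma>
    using that by (simp add: \<phi>_def indm_class[OF cfst] indm_class[OF csnd])
  have fl: "fst \<circ> \<gamma> \<in> loops X x0" "snd \<circ> \<gamma> \<in> loops Y y0" if hyp: "\<gamma> \<in> loops ?P ?p" for \<gamma>
    using loops_compose[OF that cfst] loops_compose[OF that csnd] by auto
  have psi_class: "\<psi> (loop_class X x0 \<alpha>, loop_class Y y0 \<beta>) = loop_class ?P ?p (loop_join (iX \<circ> \<alpha>) (iY \<circ> \<beta>))"
    if hyp: "\<alpha> \<in> loops X x0" "\<beta> \<in> loops Y y0" for \<alpha> \<beta>
    using that loops_compose[OF that(1) ciX iXp] loops_compose[OF that(2) ciY iYp]
    by (simp add: \<psi>_def indm_class[OF ciX iXp] indm_class[OF ciY iYp] fg_mult)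
  have fj: "fst \<circ> loop_join (iX \<circ> \<alpha>) (iY \<circ> \<beta>) = loop_join \<alpha> (\<lambda>t. x0)"
    and sj: "snd \<circ> loop_join (iX \<circ> \<alpha>) (iY \<circ> \<beta>) = loop_join (\<lambda>t. y0) \<beta>" for \<alpha> \<beta>
    by (simp_all add: fun_eq_iff loop_join_def iX_def iY_def)
  have phipsi: "\<phi> (\<psi> (A, B)) = (A, B)" if hAB: "A \<in> carrier ?GX" "B \<in> carrier ?GY" for A B
  proof -
    obtain \<alpha> where l1: "\<alpha> \<in> loops X x0" and e1: "A = loop_class X x0 \<alpha>" using hAB(1) by auto
    obtain \<beta> where l2: "\<beta> \<in> loops Y y0" and e2: "B = loop_class Y y0 \<beta>" using hAB(2) by auto
    note l = l1 l2 and e = e1 e2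
    have jl: "loop_join (iX \<circ> \<alpha>) (iY \<circ> \<beta>) \<in> loops ?P ?p"
      using loops_compose[OF l(1) ciX iXp] loops_compose[OF l(2) ciY iYp] by (rule loop_join_loops)
    show ?thesis using l unfolding e
      by (simp add: psi_class phi_class[OF jl] fj sj loop_class_eqI htp_rid htp_lid)
  qed
  have psiphi: "\<psi> (\<phi> A) = A" if hyp: "A \<in> carrier ?G" for A
  proof -
    obtain \<gamma> where l: "\<gamma> \<in> loops ?P ?p" and e: "A = loop_class ?P ?p \<gamma>" using hyp by auto
    have "loop_join (iX \<circ> (fst \<circ> \<gamma>)) (iY \<circ> (snd \<circ> \<gamma>)) =
          (\<lambda>t. (loop_join (fst \<circ> \<gamma>) (\<lambda>t. x0) t, loop_join (\<lambda>t. y0) (snd \<circ> \<gamma>) t))"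
      by (simp add: fun_eq_iff loop_join_def iX_def iY_def)
    moreover have "loop_homotopic ?P ?p (\<lambda>t. (loop_join (fst \<circ> \<gamma>) (\<lambda>t. x0) t, loop_join (\<lambda>t. y0) (snd \<circ> \<gamma>) t))
                     (\<lambda>t. ((fst \<circ> \<gamma>) t, (snd \<circ> \<gamma>) t))"
      by (rule htp_pair[OF htp_rid[OF fl(1)[OF l]] htp_lid[OF fl(2)[OF l]]])
    moreover have "(\<lambda>t. ((fst \<circ> \<gamma>) t, (snd \<circ> \<gamma>) t)) = \<gamma>" by (simp add: fun_eq_iff)
    ultimately have "loop_homotopic ?P ?p (loop_join (iX \<circ> (fst \<circ> \<gamma>)) (iY \<circ> (snd \<circ> \<gamma>))) \<gamma>" by simp
    then show ?thesis using l fl[OF l] unfolding e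
      by (simp add: phi_class psi_class loop_class_eqI)
  qed
  have phi_carrier: "\<phi> A \<in> carrier (?GX \<times>\<times> ?GY)" if hyp: "A \<in> carrier ?G" for A
  proof -
    obtain \<gamma> where l: "\<gamma> \<in> loops ?P ?p" and e: "A = loop_class ?P ?p \<gamma>" using hyp by auto
    show ?thesis using l fl[OF l] unfolding e by (simp add: phi_class)
  qed
  have psi_carrier: "\<psi> AB \<in> carrier ?G" if hyp: "AB \<in> carrier (?GX \<times>\<times> ?GY)" for AB
  proof -
    obtain \<alpha> \<beta> where l: "\<alpha> \<in> loops X x0" "\<beta> \<in> loops Y y0"
      and e: "AB = (loop_class X x0 \<alpha>, loop_class Y y0 \<beta>)"
      using hyp by auto
    have jl: "loop_join (iX \<circ> \<alpha>) (iY \<circ> \<beta>) \<in> loops ?P ?p"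
      using loops_compose[OF l(1) ciX iXp] loops_compose[OF l(2) ciY iYp] by (rule loop_join_loops)
    show ?thesis using l jl unfolding e by (simp add: psi_class)
  qed
  have hom: "\<phi> \<in> hom ?G (?GX \<times>\<times> ?GY)"
  proof (rule homI)
    show "\<phi> A \<in> carrier (?GX \<times>\<times> ?GY)" if hyp: "A \<in> carrier ?G" for A using phi_carrier[OF that] .
    fix A B assume "A \<in> carrier ?G" "B \<in> carrier ?G"
    then obtain \<gamma> \<delta> where l: "\<gamma> \<in> loops ?P ?p" "\<delta> \<in> loops ?P ?p"
      and e: "A = loop_class ?P ?p \<gamma>" "B = loop_class ?P ?p \<delta>" by auto
    show "\<phi> (A \<otimes>\<^bsub>?G\<^esub> B) = \<phi> A \<otimes>\<^bsub>?GX \<times>\<times> ?GY\<^esub> \<phi> B"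
      using l fl[OF l(1)] fl[OF l(2)] loop_join_loops[OF l] unfolding e
      by (simp add: fg_mult phi_class compose_join)
  qed
  have bij: "bij_betw \<phi> (carrier ?G) (carrier (?GX \<times>\<times> ?GY))"
  proof (rule bij_betw_byWitness[where f'=\<psi>])
    show "\<forall>a\<in>carrier ?G. \<psi> (\<phi> a) = a" using psiphi by blast
    show "\<forall>a'\<in>carrier (?GX \<times>\<times> ?GY). \<phi> (\<psi> a') = a'"
    proof
      fix a' assume "a' \<in> carrier (?GX \<times>\<times> ?GY)"
      then obtain A B where "a' = (A, B)" "A \<in> carrier ?GX" "B \<in> carrier ?GY" by (cases a') auto
      then show "\<phi> (\<psi> a') = a'" using phipsi by simp
    qed
    show "\<phi> ` carrier ?G \<subseteq> carrier (?GX \<times>\<times> ?GY)" using phi_carrier by blast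
    show "\<psi> ` carrier (?GX \<times>\<times> ?GY) \<subseteq> carrier ?G" using psi_carrier by blast
  qed
  have cphi: "continuous_map (pi1_tau ?P ?p) (prod_topology (pi1_tau X x0) (pi1_tau Y y0)) \<phi>"
    unfolding \<phi>_def
    by (intro continuous_map_pairedI indm_tau_cont[OF p cfst] indm_tau_cont[OF p csnd]) simp_all
  have cpsi: "continuous_map (prod_topology (pi1_tau X x0) (pi1_tau Y y0)) (pi1_tau ?P ?p) \<psi>"
  proof -
    have c1: "continuous_map (prod_topology (pi1_tau X x0) (pi1_tau Y y0))
                (prod_topology (pi1_tau ?P ?p) (pi1_tau ?P ?p))
                (\<lambda>z. (indm X x0 ?P ?p iX (fst z), indm Y y0 ?P ?p iY (snd z)))"
      by (intro continuous_map_pairedI continuous_map_compose[OF continuous_map_fst indm_tau_cont[OF x0 ciX iXp], unfolded o_def]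
            continuous_map_compose[OF continuous_map_snd indm_tau_cont[OF y0 ciY iYp], unfolded o_def])
    from continuous_map_compose[OF c1 gt_mult[OF pi1_tau_gt[OF p]]]
    show ?thesis by (simp add: \<psi>_def o_def case_prod_unfold)
  qed
  have "homeomorphic_map (pi1_tau ?P ?p) (prod_topology (pi1_tau X x0) (pi1_tau Y y0)) \<phi>"
    unfolding homeomorphic_map_maps homeomorphic_maps_def
    using cphi cpsi psiphi phipsi p x0 y0 by (intro exI[of _ \<psi>]) auto
  moreover have "\<phi> \<in> iso ?G (?GX \<times>\<times> ?GY)" using hom bij by (simp add: iso_def)
  ultimately show ?thesis using phi_class by blast
qed


theorem proposition3p18:
  fixes X :: "'a topology" and Y :: "'b topology" and x0 :: 'a and y0 :: 'b
  assumes "x0 \<in> topspace X" and "y0 \<in> topspace Y"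
  shows "\<exists>\<phi>. \<phi> \<in> iso (fundamental_group (prod_topology X Y) (x0, y0))
                    (fundamental_group X x0 \<times>\<times> fundamental_group Y y0) \<and>
             homeomorphic_map (pi1_tau (prod_topology X Y) (x0, y0))
                              (prod_topology (pi1_tau X x0) (pi1_tau Y y0)) \<phi> \<and>
             (\<forall>\<gamma> \<in> loops (prod_topology X Y) (x0, y0).
                \<phi> (loop_class (prod_topology X Y) (x0, y0) \<gamma>) =
                  (loop_class X x0 (fst \<circ> \<gamma>), loop_class Y y0 (snd \<circ> \<gamma>)))"
    using assms by (rule main_result)

end
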